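(* Let $\mathcal E$ be a Hilbert space, $P$ an orthogonal projection and $U$ a unitary on $\mathcal E$, and let $\varphi_1(z)=U^*(P^\perp+zP)$, $\varphi_2(z)=(P+zP^\perp)U$ for $z\in\mathbb D$. Then the pair $(M_{\varphi_1},M_{\varphi_2})$ of multiplication operators on $H^2_{\mathbb D}(\mathcal E)$ has a non-trivial joint reducing subspace if and only if $(P,U)$ has a non-trivial joint reducing subspace.
   Context: $P^\perp=I-P$. $H^2_{\mathbb D}(\mathcal E)$ is the Hilbert space of $\mathcal E$-valued analytic functions $\sum_{n\ge0}a_nz^n$ on the unit disc with $\sum\|a_n\|^2<\infty$, identified with $H^2_{\mathbb D}\otimes\mathcal E$; $M_{\varphi_i}f(z)=\varphi_i(z)f(z)$. A joint reducing subspace of a pair of operators is a closed subspace reducing both; non-trivial means different from $\{0\}$ and the whole space. *)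

theory Defs
  imports "HOL-Analysis.Analysis"
begin

(* A Hilbert space E is modelled (up to unitary equivalence) as l^2(I) for an index set I. *)

definition l2 :: "'i set \<Rightarrow> ('i \<Rightarrow> complex) set" where
  "l2 I = {x. (\<forall>i. i \<notin> I \<longrightarrow> x i = 0) \<and> (\<lambda>i. (cmod (x i))^2) summable_on I}"

definition l2_inner :: "'i set \<Rightarrow> ('i \<Rightarrow> complex) \<Rightarrow> ('i \<Rightarrow> complex) \<Rightarrow> complex" where
  "l2_inner I x y = infsum (\<lambda>i. x i * cnj (y i)) I"

definition l2_norm :: "'i set \<Rightarrow> ('i \<Rightarrow> complex) \<Rightarrow> real" where
  "l2_norm I x = sqrt (infsum (\<lambda>i. (cmod (x i))^2) I)"

definition l2_linear :: "'i set \<Rightarrow> (('i \<Rightarrow> complex) \<Rightarrow> ('i \<Rightarrow> complex)) \<Rightarrow> bool" where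
  "l2_linear I T \<longleftrightarrow> (\<forall>x\<in>l2 I. T x \<in> l2 I)
     \<and> (\<forall>x\<in>l2 I. \<forall>y\<in>l2 I. T (\<lambda>i. x i + y i) = (\<lambda>i. T x i + T y i))
     \<and> (\<forall>c. \<forall>x\<in>l2 I. T (\<lambda>i. c * x i) = (\<lambda>i. c * T x i))"

definition orth_proj :: "'i set \<Rightarrow> (('i \<Rightarrow> complex) \<Rightarrow> ('i \<Rightarrow> complex)) \<Rightarrow> bool" where
  "orth_proj I P \<longleftrightarrow> l2_linear I P \<and> (\<forall>x\<in>l2 I. P (P x) = P x)
     \<and> (\<forall>x\<in>l2 I. \<forall>y\<in>l2 I. l2_inner I (P x) y = l2_inner I x (P y))"

definition unitary_op :: "'i set \<Rightarrow> (('i \<Rightarrow> complex) \<Rightarrow> ('i \<Rightarrow> complex)) \<Rightarrow> bool" where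
  "unitary_op I U \<longleftrightarrow> l2_linear I U \<and> U ` l2 I = l2 I
     \<and> (\<forall>x\<in>l2 I. \<forall>y\<in>l2 I. l2_inner I (U x) (U y) = l2_inner I x y)"

definition l2_adj :: "'i set \<Rightarrow> (('i \<Rightarrow> complex) \<Rightarrow> ('i \<Rightarrow> complex)) \<Rightarrow> ('i \<Rightarrow> complex) \<Rightarrow> ('i \<Rightarrow> complex)" where
  "l2_adj I T y = (THE z. z \<in> l2 I \<and> (\<forall>x\<in>l2 I. l2_inner I (T x) y = l2_inner I x z))"

definition l2_orth :: "'i set \<Rightarrow> ('i \<Rightarrow> complex) set \<Rightarrow> ('i \<Rightarrow> complex) set" where
  "l2_orth I K = {y \<in> l2 I. \<forall>x\<in>K. l2_inner I x y = 0}"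

definition l2_closed_subspace :: "'i set \<Rightarrow> ('i \<Rightarrow> complex) set \<Rightarrow> bool" where
  "l2_closed_subspace I K \<longleftrightarrow> K \<subseteq> l2 I \<and> (\<lambda>_. 0) \<in> K
     \<and> (\<forall>x\<in>K. \<forall>y\<in>K. (\<lambda>i. x i + y i) \<in> K)
     \<and> (\<forall>c. \<forall>x\<in>K. (\<lambda>i. c * x i) \<in> K)
     \<and> (\<forall>s x. (\<forall>n. s n \<in> K) \<and> x \<in> l2 I \<and>
            (\<lambda>n. l2_norm I (\<lambda>i. s n i - x i)) \<longlonglongrightarrow> 0 \<longrightarrow> x \<in> K)"

definition l2_reducing :: "'i set \<Rightarrow> ('i \<Rightarrow> complex) set \<Rightarrow> (('i \<Rightarrow> complex) \<Rightarrow> ('i \<Rightarrow> complex)) \<Rightarrow> bool" where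
  "l2_reducing I K T \<longleftrightarrow> l2_closed_subspace I K \<and> T ` K \<subseteq> K \<and> T ` l2_orth I K \<subseteq> l2_orth I K"

(* Vector-valued Hardy space H^2_D(E): E-valued functions on the unit disc (set to 0 off the disc)
   of the form sum a_n z^n with sum ||a_n||^2 < infinity. *)

definition H2 :: "'i set \<Rightarrow> (complex \<Rightarrow> 'i \<Rightarrow> complex) set" where
  "H2 I = {F. (\<forall>z. z \<notin> ball 0 1 \<longrightarrow> F z = (\<lambda>_. 0))
     \<and> (\<exists>a. (\<forall>n. a n \<in> l2 I) \<and> summable (\<lambda>n. (l2_norm I (a n))^2)
          \<and> (\<forall>z\<in>ball 0 1. \<forall>i. (\<lambda>n. a n i * z ^ n) sums (F z i)))}"

definition h2_coeff :: "(complex \<Rightarrow> 'i \<Rightarrow> complex) \<Rightarrow> nat \<Rightarrow> 'i \<Rightarrow> complex" where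
  "h2_coeff F n = (\<lambda>i. (deriv ^^ n) (\<lambda>z. F z i) 0 / fact n)"

definition h2_inner :: "'i set \<Rightarrow> (complex \<Rightarrow> 'i \<Rightarrow> complex) \<Rightarrow> (complex \<Rightarrow> 'i \<Rightarrow> complex) \<Rightarrow> complex" where
  "h2_inner I F G = (\<Sum>n. l2_inner I (h2_coeff F n) (h2_coeff G n))"

definition h2_norm :: "'i set \<Rightarrow> (complex \<Rightarrow> 'i \<Rightarrow> complex) \<Rightarrow> real" where
  "h2_norm I F = sqrt (\<Sum>n. (l2_norm I (h2_coeff F n))^2)"

definition h2_orth :: "'i set \<Rightarrow> (complex \<Rightarrow> 'i \<Rightarrow> complex) set \<Rightarrow> (complex \<Rightarrow> 'i \<Rightarrow> complex) set" where
  "h2_orth I M = {G \<in> H2 I. \<forall>F\<in>M. h2_inner I F G = 0}"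

definition h2_closed_subspace :: "'i set \<Rightarrow> (complex \<Rightarrow> 'i \<Rightarrow> complex) set \<Rightarrow> bool" where
  "h2_closed_subspace I M \<longleftrightarrow> M \<subseteq> H2 I \<and> (\<lambda>_ _. 0) \<in> M
     \<and> (\<forall>F\<in>M. \<forall>G\<in>M. (\<lambda>z i. F z i + G z i) \<in> M)
     \<and> (\<forall>c. \<forall>F\<in>M. (\<lambda>z i. c * F z i) \<in> M)
     \<and> (\<forall>s F. (\<forall>n. s n \<in> M) \<and> F \<in> H2 I \<and>
            (\<lambda>n. h2_norm I (\<lambda>z i. s n z i - F z i)) \<longlonglongrightarrow> 0 \<longrightarrow> F \<in> M)"

definition h2_reducing :: "'i set \<Rightarrow> (complex \<Rightarrow> 'i \<Rightarrow> complex) set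
     \<Rightarrow> ((complex \<Rightarrow> 'i \<Rightarrow> complex) \<Rightarrow> (complex \<Rightarrow> 'i \<Rightarrow> complex)) \<Rightarrow> bool" where
  "h2_reducing I M T \<longleftrightarrow> h2_closed_subspace I M \<and> T ` M \<subseteq> M \<and> T ` h2_orth I M \<subseteq> h2_orth I M"

definition mult_op :: "(complex \<Rightarrow> ('i \<Rightarrow> complex) \<Rightarrow> ('i \<Rightarrow> complex))
     \<Rightarrow> (complex \<Rightarrow> 'i \<Rightarrow> complex) \<Rightarrow> (complex \<Rightarrow> 'i \<Rightarrow> complex)" where
  "mult_op \<phi> F = (\<lambda>z. if z \<in> ball 0 1 then \<phi> z (F z) else (\<lambda>_. 0))"

definition phi1 :: "'i set \<Rightarrow> (('i \<Rightarrow> complex) \<Rightarrow> ('i \<Rightarrow> complex)) \<Rightarrow> (('i \<Rightarrow> complex) \<Rightarrow> ('i \<Rightarrow> complex))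
     \<Rightarrow> complex \<Rightarrow> ('i \<Rightarrow> complex) \<Rightarrow> ('i \<Rightarrow> complex)" where
  "phi1 I P U z x = l2_adj I U (\<lambda>i. (x i - P x i) + z * P x i)"

definition phi2 :: "'i set \<Rightarrow> (('i \<Rightarrow> complex) \<Rightarrow> ('i \<Rightarrow> complex)) \<Rightarrow> (('i \<Rightarrow> complex) \<Rightarrow> ('i \<Rightarrow> complex))
     \<Rightarrow> complex \<Rightarrow> ('i \<Rightarrow> complex) \<Rightarrow> ('i \<Rightarrow> complex)" where
  "phi2 I P U z x = (\<lambda>i. P (U x) i + z * (U x i - P (U x) i))"

end

theory Submission
  imports Defs
begin


lemma l2_memI: "(\<And>i. i \<notin> J \<Longrightarrow> x i = 0) \<Longrightarrow> (\<lambda>i. (cmod (x i))^2) summable_on J \<Longrightarrow> x \<in> l2 J"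
  by (simp add: l2_def)

lemma l2_out: "x \<in> l2 J \<Longrightarrow> i \<notin> J \<Longrightarrow> x i = 0"
  by (simp add: l2_def)

lemma l2_sq: "x \<in> l2 J \<Longrightarrow> (\<lambda>i. (cmod (x i))^2) summable_on J"
  by (simp add: l2_def)

lemma sq_add_le: "(cmod (a+b))^2 \<le> 2*(cmod a)^2 + 2*(cmod b)^2"
proof -
  have "cmod (a+b) \<le> cmod a + cmod b" by (rule norm_triangle_ineq)
  hence "(cmod (a+b))^2 \<le> (cmod a + cmod b)^2"
    by (simp add: power_mono)
  also have "\<dots> \<le> 2*(cmod a)^2 + 2*(cmod b)^2"
  proof -
    have "0 \<le> (cmod a - cmod b)^2" by simp
    thus ?thesis by (simp add: power2_diff power2_sum)
  qed
  finally show ?thesis .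
qed

lemma l2_0[simp]: "(\<lambda>_. 0) \<in> l2 J"
  by (rule l2_memI) auto

lemma l2_add: assumes "x \<in> l2 J" "y \<in> l2 J" shows "(\<lambda>i. x i + y i) \<in> l2 J"
proof (rule l2_memI)
  show "(\<lambda>i. (cmod (x i + y i))^2) summable_on J"
  proof (rule summable_on_comparison_test)
    show "(\<lambda>i. 2*(cmod (x i))^2 + 2*(cmod (y i))^2) summable_on J"
      using assms by (intro summable_on_add summable_on_cmult_right l2_sq)
  qed (auto intro: sq_add_le)
qed (use assms in \<open>auto simp: l2_out\<close>)

lemma l2_scale: assumes "x \<in> l2 J" shows "(\<lambda>i. c * x i) \<in> l2 J"
proof (rule l2_memI)
  have "(\<lambda>i. (cmod c)^2 * (cmod (x i))^2) summable_on J"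
    using assms by (intro summable_on_cmult_right l2_sq)
  thus "(\<lambda>i. (cmod (c * x i))^2) summable_on J"
    by (simp add: norm_mult power_mult_distrib)
qed (use assms in \<open>auto simp: l2_out\<close>)

lemma l2_uminus: assumes "x \<in> l2 J" shows "(\<lambda>i. - x i) \<in> l2 J"
  using l2_scale[OF assms, of "-1"] by simp

lemma l2_diff: assumes "x \<in> l2 J" "y \<in> l2 J" shows "(\<lambda>i. x i - y i) \<in> l2 J"
  using l2_add[OF assms(1) l2_uminus[OF assms(2)]] by simp

lemma l2_prod_summable: assumes "x \<in> l2 J" "y \<in> l2 J"
  shows "(\<lambda>i. x i * cnj (y i)) summable_on J"
proof -
  have "(\<lambda>i. norm (x i * cnj (y i))) summable_on J"
  proof (rule Infinite_Sum.abs_summable_on_comparison_test'[where f="\<lambda>i. x i * cnj (y i)" and g="\<lambda>i. (cmod (x i))^2 + (cmod (y i))^2"])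
    show "(\<lambda>i. (cmod (x i))^2 + (cmod (y i))^2) summable_on J"
      using assms by (intro summable_on_add l2_sq)
    fix i
    have "cmod (x i) * cmod (y i) \<le> (cmod (x i))^2 + (cmod (y i))^2"
    proof -
      have "0 \<le> (cmod (x i) - cmod (y i))^2" by simp
      hence "2 * (cmod (x i) * cmod (y i)) \<le> (cmod (x i))^2 + (cmod (y i))^2"
        by (simp add: power2_diff)
      moreover have "0 \<le> (cmod (x i))^2" "0 \<le> (cmod (y i))^2" by simp_all
      ultimately show ?thesis by linarith
    qed
    thus "norm (x i * cnj (y i)) \<le> (cmod (x i))^2 + (cmod (y i))^2"
      by (simp add: norm_mult)
  qed
  thus ?thesis by (simp add: summable_on_iff_abs_summable_on_complex)
qed

lemma l2_inner_add_left: assumes "x \<in> l2 J" "y \<in> l2 J" "z \<in> l2 J"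
  shows "l2_inner J (\<lambda>i. x i + y i) z = l2_inner J x z + l2_inner J y z"
proof -
  have "(\<lambda>i. (x i + y i) * cnj (z i)) = (\<lambda>i. x i * cnj (z i) + y i * cnj (z i))"
    by (simp add: fun_eq_iff distrib_right)
  then show ?thesis
    by (simp add: l2_inner_def infsum_add[OF l2_prod_summable[OF assms(1,3)] l2_prod_summable[OF assms(2,3)]])
qed

lemma l2_inner_add_right: assumes "x \<in> l2 J" "y \<in> l2 J" "z \<in> l2 J"
  shows "l2_inner J z (\<lambda>i. x i + y i) = l2_inner J z x + l2_inner J z y"
proof -
  have "(\<lambda>i. z i * cnj (x i + y i)) = (\<lambda>i. z i * cnj (x i) + z i * cnj (y i))"
    by (simp add: fun_eq_iff distrib_left)
  then show ?thesis
    by (simp add: l2_inner_def infsum_add[OF l2_prod_summable[OF assms(3,1)] l2_prod_summable[OF assms(3,2)]])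
qed

lemma l2_inner_scale_left: assumes "x \<in> l2 J" "y \<in> l2 J"
  shows "l2_inner J (\<lambda>i. c * x i) y = c * l2_inner J x y"
proof -
  have "(\<lambda>i. c * x i * cnj (y i)) = (\<lambda>i. c * (x i * cnj (y i)))" by (simp add: mult.assoc)
  then show ?thesis by (simp add: l2_inner_def infsum_cmult_right[OF l2_prod_summable[OF assms]])
qed

lemma l2_inner_scale_right: assumes "x \<in> l2 J" "y \<in> l2 J"
  shows "l2_inner J x (\<lambda>i. c * y i) = cnj c * l2_inner J x y"
proof -
  have "(\<lambda>i. x i * cnj (c * y i)) = (\<lambda>i. cnj c * (x i * cnj (y i)))" by (simp add: fun_eq_iff)
  then show ?thesis by (simp add: l2_inner_def infsum_cmult_right[OF l2_prod_summable[OF assms]])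
qed

lemma l2_inner_cnj: "cnj (l2_inner J x y) = l2_inner J y x"
  unfolding l2_inner_def by (subst infsum_cnj[symmetric]) (simp add: mult.commute)

lemma l2_inner_diff_left: assumes "x \<in> l2 J" "y \<in> l2 J" "z \<in> l2 J"
  shows "l2_inner J (\<lambda>i. x i - y i) z = l2_inner J x z - l2_inner J y z"
proof -
  have e: "(\<lambda>i. x i - y i) = (\<lambda>i. x i + (-1) * y i)" by simp
  have "l2_inner J (\<lambda>i. x i + (-1) * y i) z = l2_inner J x z + l2_inner J (\<lambda>i. (-1) * y i) z"
    using assms by (intro l2_inner_add_left l2_scale)
  also have "l2_inner J (\<lambda>i. (-1) * y i) z = - l2_inner J y z"
    using l2_inner_scale_left[OF assms(2,3), of "-1"] by simp
  finally show ?thesis unfolding e by simp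
qed

lemma l2_inner_diff_right: assumes "x \<in> l2 J" "y \<in> l2 J" "z \<in> l2 J"
  shows "l2_inner J z (\<lambda>i. x i - y i) = l2_inner J z x - l2_inner J z y"
proof -
  have e: "(\<lambda>i. x i - y i) = (\<lambda>i. x i + (-1) * y i)" by simp
  have "l2_inner J z (\<lambda>i. x i + (-1) * y i) = l2_inner J z x + l2_inner J z (\<lambda>i. (-1) * y i)"
    using assms by (intro l2_inner_add_right l2_scale)
  also have "l2_inner J z (\<lambda>i. (-1) * y i) = - l2_inner J z y"
    using l2_inner_scale_right[OF assms(3,2), of "-1"] by simp
  finally show ?thesis unfolding e by simp
qed

lemma l2_inner_0_left[simp]: "l2_inner J (\<lambda>_. 0) y = 0"
  by (simp add: l2_inner_def)
lemma l2_inner_0_right[simp]: "l2_inner J x (\<lambda>_. 0) = 0"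
  by (simp add: l2_inner_def)

lemma l2_norm_sq_nonneg: "0 \<le> infsum (\<lambda>i. (cmod (x i))^2) J"
  by (rule infsum_nonneg) simp

lemma l2_norm_nonneg: "0 \<le> l2_norm J x"
  by (simp add: l2_norm_def l2_norm_sq_nonneg)

lemma l2_norm_sq: "(l2_norm J x)^2 = infsum (\<lambda>i. (cmod (x i))^2) J"
  by (simp add: l2_norm_def l2_norm_sq_nonneg)

lemma l2_inner_self: assumes "x \<in> l2 J"
  shows "l2_inner J x x = complex_of_real ((l2_norm J x)^2)"
proof -
  have "((\<lambda>i. complex_of_real ((cmod (x i))^2)) has_sum complex_of_real (infsum (\<lambda>i. (cmod (x i))^2) J)) J"
    using assms by (intro has_sum_of_real has_sum_infsum l2_sq)
  moreover have "(\<lambda>i. complex_of_real ((cmod (x i))^2)) = (\<lambda>i. x i * cnj (x i))"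
    by (auto simp: complex_norm_square[symmetric])
  ultimately have "((\<lambda>i. x i * cnj (x i)) has_sum complex_of_real (infsum (\<lambda>i. (cmod (x i))^2) J)) J"
    by simp
  hence "l2_inner J x x = complex_of_real (infsum (\<lambda>i. (cmod (x i))^2) J)"
    unfolding l2_inner_def by (rule infsumI)
  thus ?thesis by (simp add: l2_norm_sq)
qed

lemma l2_norm_0_imp: assumes "x \<in> l2 J" "l2_norm J x = 0" shows "x = (\<lambda>_. 0)"
proof
  fix i
  show "x i = 0"
  proof (cases "i \<in> J")
    case True
    have "infsum (\<lambda>i. (cmod (x i))^2) J = 0" using assms(2) l2_norm_sq[of J x] by simp
    hence "(cmod (x i))^2 = 0"
      using assms True by (intro nonneg_infsum_le_0D[where A=J]) (auto intro: l2_sq)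
    thus ?thesis by simp
  qed (use assms in \<open>auto simp: l2_out\<close>)
qed

lemma l2_inner_self_0: assumes "x \<in> l2 J" "l2_inner J x x = 0" shows "x = (\<lambda>_. 0)"
  using assms l2_inner_self[OF assms(1)] l2_norm_0_imp by force

lemma l2_coord_le: assumes "x \<in> l2 J" shows "cmod (x i) \<le> l2_norm J x"
proof (cases "i \<in> J")
  case True
  have "infsum (\<lambda>i. (cmod (x i))^2) {i} \<le> infsum (\<lambda>i. (cmod (x i))^2) J"
    using True assms by (intro infsum_mono_neutral) (auto intro: l2_sq)
  hence "(cmod (x i))^2 \<le> (l2_norm J x)^2" by (simp add: l2_norm_sq)
  thus ?thesis using l2_norm_nonneg by (metis abs_le_square_iff abs_norm_cancel abs_of_nonneg)
qed (use assms l2_norm_nonneg in \<open>auto simp: l2_out\<close>)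

lemma l2_UNIV: assumes "x \<in> l2 J" shows "x \<in> l2 UNIV"
proof (rule l2_memI)
  show "(\<lambda>i. (cmod (x i))^2) summable_on UNIV"
    using l2_sq[OF assms] by (subst summable_on_cong_neutral[where T=J]) (auto simp: l2_out[OF assms])
qed simp

lemma l2_inner_UNIV: assumes "x \<in> l2 J" shows "l2_inner J x y = l2_inner UNIV x y"
  unfolding l2_inner_def by (rule infsum_cong_neutral) (auto simp: l2_out[OF assms])

lemma l2_norm_UNIV: assumes "x \<in> l2 J" shows "l2_norm J x = l2_norm UNIV x"
  unfolding l2_norm_def by (subst infsum_cong_neutral[where T=J]) (auto simp: l2_out[OF assms])

lemma l2_UNIV_J: "x \<in> l2 UNIV \<Longrightarrow> (\<And>i. i \<notin> J \<Longrightarrow> x i = 0) \<Longrightarrow> x \<in> l2 J"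
  by (rule l2_memI) (auto intro: summable_on_subset[OF l2_sq subset_UNIV])


typedef 'a ell2 = "l2 (UNIV::'a set)" morphisms evec mkv
  by (rule exI[of _ "\<lambda>_. 0"]) simp

lemma evec_l2[simp]: "evec a \<in> l2 UNIV"
  by (rule evec)

lemma vec_mk[simp]: "x \<in> l2 UNIV \<Longrightarrow> evec (mkv x) = x"
  by (simp add: mkv_inverse)

lemma ell2_eqI: "(\<And>i. evec a i = evec b i) \<Longrightarrow> a = b"
  by (metis evec_inject ext)

instantiation ell2 :: (type) real_inner
begin
definition zero_ell2_def: "0 = mkv (\<lambda>_. 0)"
definition plus_ell2_def: "a + b = mkv (\<lambda>i. evec a i + evec b i)"
definition minus_ell2_def: "a - b = mkv (\<lambda>i. evec a i - evec b i)"
definition uminus_ell2_def: "- a = mkv (\<lambda>i. - evec a i)"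
definition scaleR_ell2_def: "scaleR r a = mkv (\<lambda>i. complex_of_real r * evec a i)"
definition norm_ell2_def: "norm a = l2_norm UNIV (evec a)"
definition sgn_ell2_def: "sgn (a :: 'a ell2) = scaleR (inverse (norm a)) a"
definition dist_ell2_def: "dist (a :: 'a ell2) b = norm (a - b)"
definition uniformity_ell2_def: "(uniformity :: ('a ell2 \<times> 'a ell2) filter) = (INF e\<in>{0<..}. principal {(x, y). dist x y < e})"
definition open_ell2_def: "open (U :: 'a ell2 set) = (\<forall>x\<in>U. \<forall>\<^sub>F (x', y) in uniformity. x' = x \<longrightarrow> y \<in> U)"
definition inner_ell2_def: "inner a b = Re (l2_inner UNIV (evec a) (evec b))"

lemma vec_zero[simp]: "evec (0::'a ell2) = (\<lambda>_. 0)"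
  by (simp add: zero_ell2_def)
lemma vec_add[simp]: "evec (a + b) = (\<lambda>i. evec a i + evec b i)"
  by (simp add: plus_ell2_def l2_add)
lemma vec_diff[simp]: "evec (a - b) = (\<lambda>i. evec a i - evec b i)"
  by (simp add: minus_ell2_def l2_diff)
lemma vec_uminus[simp]: "evec (- a) = (\<lambda>i. - evec a i)"
  by (simp add: uminus_ell2_def l2_uminus)
lemma vec_scaleR[simp]: "evec (scaleR r a) = (\<lambda>i. complex_of_real r * evec a i)"
  by (simp add: scaleR_ell2_def l2_scale)

instance
proof
  fix a b c :: "'a ell2" and r s :: real and U :: "'a ell2 set"
  show "a + b + c = a + (b + c)" by (rule ell2_eqI) simp
  show "a + b = b + a" by (rule ell2_eqI) simp
  show "0 + a = a" by (rule ell2_eqI) simp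
  show "- a + a = 0" by (rule ell2_eqI) simp
  show "a - b = a + - b" by (rule ell2_eqI) simp
  show "r *\<^sub>R (a + b) = r *\<^sub>R a + r *\<^sub>R b" by (rule ell2_eqI) (simp add: algebra_simps)
  show "(r + s) *\<^sub>R a = r *\<^sub>R a + s *\<^sub>R a" by (rule ell2_eqI) (simp add: algebra_simps)
  show "r *\<^sub>R s *\<^sub>R a = (r * s) *\<^sub>R a" by (rule ell2_eqI) (simp add: algebra_simps)
  show "1 *\<^sub>R a = a" by (rule ell2_eqI) simp
  show "sgn a = inverse (norm a) *\<^sub>R a" by (simp add: sgn_ell2_def)
  show "dist a b = norm (a - b)" by (simp add: dist_ell2_def)
  show "(uniformity :: ('a ell2 \<times> 'a ell2) filter) = (INF e\<in>{0<..}. principal {(x, y). dist x y < e})"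
    by (simp add: uniformity_ell2_def)
  show "open U = (\<forall>x\<in>U. \<forall>\<^sub>F (x', y) in uniformity. x' = x \<longrightarrow> y \<in> U)"
    by (simp add: open_ell2_def)
  show "inner a b = inner b a"
    unfolding inner_ell2_def by (subst l2_inner_cnj[symmetric]) simp
  show "inner (a + b) c = inner a c + inner b c"
    unfolding inner_ell2_def by (simp add: l2_inner_add_left)
  show "inner (r *\<^sub>R a) b = r * inner a b"
    unfolding inner_ell2_def by (simp add: l2_inner_scale_left)
  show "0 \<le> inner a a"
    unfolding inner_ell2_def by (simp add: l2_inner_self)
  show "(inner a a = 0) = (a = 0)"
  proof
    assume "inner a a = 0"
    hence "l2_norm UNIV (evec a) = 0" unfolding inner_ell2_def by (simp add: l2_inner_self)
    hence "evec a = (\<lambda>_. 0)" by (intro l2_norm_0_imp) auto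
    thus "a = 0" by (intro ell2_eqI) simp
  qed (simp add: inner_ell2_def)
  show "norm a = sqrt (inner a a)"
    unfolding inner_ell2_def norm_ell2_def by (simp add: l2_inner_self l2_norm_nonneg)
qed
end

lemma norm_ell2: "norm a = l2_norm UNIV (evec a)" by (simp add: norm_ell2_def)
lemma inner_ell2: "inner a b = Re (l2_inner UNIV (evec a) (evec b))" by (simp add: inner_ell2_def)

lemma coord_le_norm: "cmod (evec a i) \<le> norm a"
  unfolding norm_ell2 by (rule l2_coord_le) simp


lemma sum_le_l2: assumes "x \<in> l2 UNIV" "finite F"
  shows "(\<Sum>i\<in>F. (cmod (x i))^2) \<le> (l2_norm UNIV x)^2"
proof -
  have "infsum (\<lambda>i. (cmod (x i))^2) F \<le> infsum (\<lambda>i. (cmod (x i))^2) UNIV"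
    using assms by (intro infsum_mono_neutral) (auto intro: l2_sq)
  thus ?thesis using assms by (simp add: l2_norm_sq)
qed

instance ell2 :: (type) complete_space
proof
  fix X :: "nat \<Rightarrow> 'a ell2"
  assume C: "Cauchy X"
  have coordC: "Cauchy (\<lambda>n. evec (X n) i)" for i
  proof (rule CauchyI)
    fix e :: real assume "0 < e"
    from CauchyD[OF C this] obtain M where M: "\<forall>m\<ge>M. \<forall>n\<ge>M. norm (X m - X n) < e" by blast
    show "\<exists>M. \<forall>m\<ge>M. \<forall>n\<ge>M. norm (evec (X m) i - evec (X n) i) < e"
    proof (intro exI allI impI)
      fix m n assume "m \<ge> M" "n \<ge> M"
      hence "norm (X m - X n) < e" using M by blast
      moreover have "cmod (evec (X m - X n) i) \<le> norm (X m - X n)" by (rule coord_le_norm)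
      ultimately show "norm (evec (X m) i - evec (X n) i) < e" by simp
    qed
  qed
  define x where "x i = lim (\<lambda>n. evec (X n) i)" for i
  have xlim: "(\<lambda>n. evec (X n) i) \<longlonglongrightarrow> x i" for i
    using coordC[of i] by (simp add: x_def Cauchy_convergent_iff convergent_LIMSEQ_iff)
  have key: "\<exists>N. \<forall>n\<ge>N. \<forall>F. finite F \<longrightarrow> (\<Sum>i\<in>F. (cmod (evec (X n) i - x i))^2) \<le> e^2"
    if e: "0 < e" for e
  proof -
    from CauchyD[OF C e] obtain M where M: "\<forall>m\<ge>M. \<forall>n\<ge>M. norm (X m - X n) < e" by blast
    have "(\<Sum>i\<in>F. (cmod (evec (X n) i - x i))^2) \<le> e^2" if n: "n \<ge> M" and F: "finite F" for n F
    proof -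
      have lim: "(\<lambda>m. \<Sum>i\<in>F. (cmod (evec (X n) i - evec (X m) i))^2) \<longlonglongrightarrow> (\<Sum>i\<in>F. (cmod (evec (X n) i - x i))^2)"
        by (intro tendsto_intros xlim)
      have "\<forall>m\<ge>M. (\<Sum>i\<in>F. (cmod (evec (X n) i - evec (X m) i))^2) \<le> e^2"
      proof (intro allI impI)
        fix m assume m: "m \<ge> M"
        have "(\<Sum>i\<in>F. (cmod (evec (X n) i - evec (X m) i))^2) \<le> (norm (X n - X m))^2"
          using sum_le_l2[OF evec_l2[of "X n - X m"] F] by (simp add: norm_ell2)
        also have "\<dots> \<le> e^2" using M n m by (intro power_mono) (auto intro: less_imp_le)
        finally show "(\<Sum>i\<in>F. (cmod (evec (X n) i - evec (X m) i))^2) \<le> e^2" .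
      qed
      thus ?thesis by (intro LIMSEQ_le_const2[OF lim]) auto
    qed
    thus ?thesis by blast
  qed
  obtain N where N: "\<forall>n\<ge>N. \<forall>F. finite F \<longrightarrow> (\<Sum>i\<in>F. (cmod (evec (X n) i - x i))^2) \<le> 1^2"
    using key[of 1] by auto
  have dN: "(\<lambda>i. evec (X N) i - x i) \<in> l2 UNIV"
  proof (rule l2_memI)
    show "(\<lambda>i. (cmod (evec (X N) i - x i))^2) summable_on UNIV"
      by (rule nonneg_bdd_above_summable_on) (use N in \<open>auto intro!: bdd_aboveI[where M=1]\<close>)
  qed simp
  have xl2: "x \<in> l2 UNIV" using l2_diff[OF evec_l2[of "X N"] dN] by simp
  show "convergent X"
  proof (rule convergentI)
    show "X \<longlonglongrightarrow> mkv x"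
    proof (rule LIMSEQ_I)
      fix r :: real assume r: "0 < r"
      from key[of "r/2"] r obtain N' where N': "\<forall>n\<ge>N'. \<forall>F. finite F \<longrightarrow> (\<Sum>i\<in>F. (cmod (evec (X n) i - x i))^2) \<le> (r/2)^2"
        by auto
      show "\<exists>no. \<forall>n\<ge>no. norm (X n - mkv x) < r"
      proof (intro exI allI impI)
        fix n assume n: "n \<ge> N'"
        have dn: "(\<lambda>i. evec (X n) i - x i) \<in> l2 UNIV" by (intro l2_diff) (simp_all add: xl2)
        have "(l2_norm UNIV (\<lambda>i. evec (X n) i - x i))^2 \<le> (r/2)^2"
          unfolding l2_norm_sq by (rule infsum_le_finite_sums) (use l2_sq[OF dn] N' n in auto)
        hence "l2_norm UNIV (\<lambda>i. evec (X n) i - x i) \<le> r/2"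
          by (rule power2_le_imp_le) (use r in simp)
        moreover have "norm (X n - mkv x) = l2_norm UNIV (\<lambda>i. evec (X n) i - x i)"
          by (simp add: norm_ell2 xl2)
        ultimately show "norm (X n - mkv x) < r" using r by simp
      qed
    qed
  qed
qed

section \<open>Projection theorem\<close>

lemma parallelogram: fixes a b :: "'a::real_inner"
  shows "(norm (a - b))^2 + (norm (a + b))^2 = 2 * (norm a)^2 + 2 * (norm b)^2"
  by (simp add: power2_norm_eq_inner inner_add inner_diff inner_commute algebra_simps)

lemma proj_exists:
  fixes V :: "'a::{real_inner,complete_space} set"
  assumes cl: "closed V" and sub: "subspace V"
  shows "\<exists>p\<in>V. \<forall>v\<in>V. inner (x - p) v = 0"
proof -
  define D where "D = (\<lambda>v. (norm (x - v))^2) ` V"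
  define d where "d = Inf D"
  have V0: "0 \<in> V" using sub by (rule subspace_0)
  have Dne: "D \<noteq> {}" using V0 by (auto simp: D_def)
  have Dbdd: "bdd_below D" by (auto simp: D_def intro!: bdd_belowI[where m=0])
  have dle: "d \<le> (norm (x - v))^2" if "v \<in> V" for v
    unfolding d_def by (rule cInf_lower) (use that Dbdd in \<open>auto simp: D_def\<close>)
  have "\<forall>n. \<exists>v. v \<in> V \<and> (norm (x - v))^2 < d + inverse (real (Suc n))"
  proof
    fix n
    have "Inf D < d + inverse (real (Suc n))" by (simp add: d_def)
    from cInf_lessD[OF Dne this] show "\<exists>v. v \<in> V \<and> (norm (x - v))^2 < d + inverse (real (Suc n))"
      by (auto simp: D_def)
  qed
  then obtain v where v: "\<And>n. v n \<in> V" "\<And>n. (norm (x - v n))^2 < d + inverse (real (Suc n))"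
    by metis
  have Cv: "Cauchy v"
  proof (rule CauchyI)
    fix e :: real assume e: "0 < e"
    obtain M0 where M0: "M0 > 0" "inverse (real M0) < e^2 / 4"
      using ex_inverse_of_nat_less[of "e^2/4"] e by auto
    define M where "M = M0"
    have M: "inverse (real (Suc M)) < e^2 / 4"
      using M0 by (smt (verit) M_def le_imp_inverse_le of_nat_0_less_iff of_nat_Suc)
    show "\<exists>M. \<forall>m\<ge>M. \<forall>n\<ge>M. norm (v m - v n) < e"
    proof (intro exI allI impI)
      fix m n assume m: "m \<ge> M" and n: "n \<ge> M"
      have mid: "(1/2) *\<^sub>R (v m + v n) \<in> V" using sub v by (intro subspace_scale subspace_add) auto
      have dmid: "d \<le> (norm (x - (1/2) *\<^sub>R (v m + v n)))^2" by (rule dle[OF mid])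
      have par: "(norm (v m - v n))^2 + (norm ((x - v n) + (x - v m)))^2 = 2*(norm (x - v n))^2 + 2*(norm (x - v m))^2"
        using parallelogram[of "x - v n" "x - v m"] by simp
      have "(x - v n) + (x - v m) = 2 *\<^sub>R (x - (1/2) *\<^sub>R (v m + v n))" by (simp add: algebra_simps scaleR_2)
      hence "(norm ((x - v n) + (x - v m)))^2 = 4 * (norm (x - (1/2) *\<^sub>R (v m + v n)))^2"
        by (simp add: power2_eq_square)
      have im: "inverse (real (Suc m)) \<le> inverse (real (Suc M))" using m by (simp add: le_imp_inverse_le)
      have inn: "inverse (real (Suc n)) \<le> inverse (real (Suc M))" using n by (simp add: le_imp_inverse_le)
      have "(norm (v m - v n))^2 < e^2"
        using par \<open>(norm ((x - v n) + (x - v m)))^2 = _\<close> dmid v(2)[of m] v(2)[of n] im inn M by linarith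
      thus "norm (v m - v n) < e" using e by (simp add: power_less_imp_less_base)
    qed
  qed
  then obtain p where p: "v \<longlonglongrightarrow> p" using Cauchy_convergent_iff convergent_def by blast
  have pV: "p \<in> V" using closed_sequentially[OF cl] v(1) p by blast
  have pd: "(norm (x - p))^2 \<le> d"
  proof (rule LIMSEQ_le[where X="\<lambda>n. (norm (x - v n))^2" and Y="\<lambda>n. d + inverse (real (Suc n))"])
    show "(\<lambda>n. (norm (x - v n))^2) \<longlonglongrightarrow> (norm (x - p))^2" by (intro tendsto_intros p)
    show "(\<lambda>n. d + inverse (real (Suc n))) \<longlonglongrightarrow> d"
      using tendsto_add[OF tendsto_const LIMSEQ_inverse_real_of_nat, of d] by simp
    show "\<exists>N. \<forall>n\<ge>N. (norm (x - v n))^2 \<le> d + inverse (real (Suc n))" using v(2) less_imp_le by blast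
  qed
  show ?thesis
  proof (intro bexI[OF _ pV] ballI)
    fix u assume u: "u \<in> V"
    define w where "w = x - p"
    define c where "c = inner w u"
    define s where "s = (norm u)^2"
    define t where "t = c / (s + 1)"
    have s0: "0 \<le> s" by (simp add: s_def)
    have "p + t *\<^sub>R u \<in> V" using sub pV u by (intro subspace_add subspace_scale) auto
    hence d1: "d \<le> (norm (x - (p + t *\<^sub>R u)))^2" by (rule dle)
    have e1: "x - (p + t *\<^sub>R u) = w - t *\<^sub>R u" by (simp add: w_def algebra_simps)
    have "(norm w)^2 \<le> (norm (w - t *\<^sub>R u))^2" using pd d1 unfolding e1 w_def by linarith
    also have "(norm (w - t *\<^sub>R u))^2 = (norm w)^2 - 2 * t * c + t^2 * s"
      unfolding s_def c_def power2_norm_eq_inner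
      by (simp add: inner_diff_left inner_diff_right inner_commute[of u w] algebra_simps power2_eq_square)
    finally have "0 \<le> t * (t * s - 2 * c)" by (simp add: algebra_simps power2_eq_square)
    also have "t * (t * s - 2 * c) = - (c^2 * (s + 2)) / (s+1)^2"
      using s0 by (simp add: t_def field_simps power2_eq_square)
    finally have "0 \<le> - (c^2 * (s + 2)) / (s+1)^2" .
    hence "c^2 * (s + 2) / (s+1)^2 \<le> 0" by simp
    moreover have "0 < (s+1)^2" using s0 by simp
    ultimately have "c^2 * (s + 2) \<le> 0" by (simp add: divide_le_0_iff)
    hence "c^2 \<le> 0" using s0 by (simp add: mult_le_0_iff)
    thus "inner (x - p) u = 0" by (simp add: c_def w_def)
  qed
qed


lemma evec_mkv_J[simp]: "x \<in> l2 J \<Longrightarrow> evec (mkv x) = x"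
  by (metis vec_mk l2_UNIV)

lemma norm_mkv: assumes "x \<in> l2 J" shows "norm (mkv x) = l2_norm J x"
  using assms by (simp add: norm_ell2 l2_norm_UNIV)

lemma inner_mkv: assumes "x \<in> l2 J" "y \<in> l2 J"
  shows "inner (mkv x) (mkv y) = Re (l2_inner J x y)"
  using assms by (simp add: inner_ell2 l2_inner_UNIV)

lemma mkv_add: assumes "x \<in> l2 J" "y \<in> l2 J" shows "mkv (\<lambda>i. x i + y i) = mkv x + mkv y"
  using assms l2_add[OF assms] by (intro ell2_eqI) simp

lemma mkv_diff: assumes "x \<in> l2 J" "y \<in> l2 J" shows "mkv (\<lambda>i. x i - y i) = mkv x - mkv y"
  using assms l2_diff[OF assms] by (intro ell2_eqI) simp

lemma l2_norm_scale: "l2_norm J (\<lambda>i. c * x i) = cmod c * l2_norm J x"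
proof -
  have "infsum (\<lambda>i. (cmod (c * x i))^2) J = (cmod c)^2 * infsum (\<lambda>i. (cmod (x i))^2) J"
    by (simp add: norm_mult power_mult_distrib infsum_cmult_right')
  thus ?thesis by (simp add: l2_norm_def real_sqrt_mult)
qed

lemma l2_triangle: assumes "x \<in> l2 J" "y \<in> l2 J"
  shows "l2_norm J (\<lambda>i. x i + y i) \<le> l2_norm J x + l2_norm J y"
  using norm_triangle_ineq[of "mkv x" "mkv y"] assms
  by (simp add: norm_mkv[OF l2_add[OF assms], symmetric] mkv_add norm_mkv)

lemma l2_cs: assumes x: "x \<in> l2 J" and y: "y \<in> l2 J"
  shows "cmod (l2_inner J x y) \<le> l2_norm J x * l2_norm J y"
proof (cases "l2_inner J x y = 0")
  case True thus ?thesis by (simp add: l2_norm_nonneg)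
next
  case False
  define c where "c = l2_inner J x y"
  define u where "u = cnj c / cmod c"
  have x': "(\<lambda>i. u * x i) \<in> l2 J" using x by (rule l2_scale)
  have "l2_inner J (\<lambda>i. u * x i) y = u * c" using x y by (simp add: l2_inner_scale_left c_def)
  also have "u * c = complex_of_real (cmod c)"
    using False by (simp add: u_def c_def field_simps complex_norm_square[symmetric] power2_eq_square)
  finally have "cmod c = Re (l2_inner J (\<lambda>i. u * x i) y)" by simp
  also have "\<dots> = inner (mkv (\<lambda>i. u * x i)) (mkv y)" using x' y by (simp add: inner_mkv)
  also have "\<dots> \<le> norm (mkv (\<lambda>i. u * x i)) * norm (mkv y)" by (rule norm_cauchy_schwarz)
  also have "\<dots> = l2_norm J x * l2_norm J y"
  proof -
    have "cmod u = 1" using False by (simp add: u_def c_def norm_divide)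
    hence "norm (mkv (\<lambda>i. u * x i)) = l2_norm J x"
      using norm_mkv[OF x'] l2_norm_scale[of J u x] by simp
    thus ?thesis using norm_mkv[OF y] by simp
  qed
  finally show ?thesis by (simp add: c_def)
qed

lemma l2_orth_sub: "l2_orth J K \<subseteq> l2 J"
  by (auto simp: l2_orth_def)

lemma l2_closed_subspace_l2: "l2_closed_subspace J K \<Longrightarrow> K \<subseteq> l2 J"
  by (simp add: l2_closed_subspace_def)

lemma l2_orth_closed: assumes L: "L \<subseteq> l2 J" shows "l2_closed_subspace J (l2_orth J L)"
  unfolding l2_closed_subspace_def
proof (intro conjI allI ballI impI)
  show "l2_orth J L \<subseteq> l2 J" by (rule l2_orth_sub)
  show "(\<lambda>_. 0) \<in> l2_orth J L" by (simp add: l2_orth_def)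
  fix a b assume a: "a \<in> l2_orth J L" and b: "b \<in> l2_orth J L"
  show "(\<lambda>i. a i + b i) \<in> l2_orth J L"
    using a b L by (auto simp: l2_orth_def l2_add l2_inner_add_right subset_iff)
next
  fix c a assume a: "a \<in> l2_orth J L"
  show "(\<lambda>i. c * a i) \<in> l2_orth J L"
    using a L by (auto simp: l2_orth_def l2_scale l2_inner_scale_right subset_iff)
next
  fix s x assume H: "(\<forall>n. s n \<in> l2_orth J L) \<and> x \<in> l2 J \<and> (\<lambda>n. l2_norm J (\<lambda>i. s n i - x i)) \<longlonglongrightarrow> 0"
  hence s: "\<And>n. s n \<in> l2_orth J L" and x: "x \<in> l2 J" and lim: "(\<lambda>n. l2_norm J (\<lambda>i. s n i - x i)) \<longlonglongrightarrow> 0"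
    by auto
  have sl2: "s n \<in> l2 J" for n using s l2_orth_sub by blast
  show "x \<in> l2_orth J L"
    unfolding l2_orth_def
  proof (intro CollectI conjI ballI x)
    fix k assume k: "k \<in> L"
    have kl2: "k \<in> l2 J" using k L by blast
    have bound: "cmod (l2_inner J k x) \<le> l2_norm J k * l2_norm J (\<lambda>i. s n i - x i)" for n
    proof -
      have "l2_inner J k (\<lambda>i. s n i - x i) = l2_inner J k (s n) - l2_inner J k x"
        by (rule l2_inner_diff_right[OF sl2 x kl2])
      also have "l2_inner J k (s n) = 0" using s[of n] k by (auto simp: l2_orth_def)
      finally have "cmod (l2_inner J k x) = cmod (l2_inner J k (\<lambda>i. s n i - x i))" by simp
      also have "\<dots> \<le> l2_norm J k * l2_norm J (\<lambda>i. s n i - x i)"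
        using kl2 by (intro l2_cs l2_diff sl2 x)
      finally show ?thesis .
    qed
    have "cmod (l2_inner J k x) \<le> l2_norm J k * 0"
      by (rule LIMSEQ_le[OF tendsto_const tendsto_mult[OF tendsto_const lim]]) (use bound in auto)
    thus "l2_inner J k x = 0" by simp
  qed
qed

theorem l2_orth_orth:
  assumes K: "l2_closed_subspace J K" and y: "y \<in> l2_orth J (l2_orth J K)"
  shows "y \<in> K"
proof -
  have Kl2: "K \<subseteq> l2 J" using K by (simp add: l2_closed_subspace_def)
  have K0: "(\<lambda>_. 0) \<in> K" and Kadd: "\<And>a b. a \<in> K \<Longrightarrow> b \<in> K \<Longrightarrow> (\<lambda>i. a i + b i) \<in> K"
    and Kscale: "\<And>c a. a \<in> K \<Longrightarrow> (\<lambda>i. c * a i) \<in> K"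
    and Klim: "\<And>s x. (\<forall>n. s n \<in> K) \<Longrightarrow> x \<in> l2 J \<Longrightarrow> (\<lambda>n. l2_norm J (\<lambda>i. s n i - x i)) \<longlonglongrightarrow> 0 \<Longrightarrow> x \<in> K"
    using K unfolding l2_closed_subspace_def by blast+
  define V where "V = (mkv ` K :: 'a ell2 set)"
  have sub: "subspace V"
    unfolding subspace_def
  proof (intro conjI ballI allI)
    have "(0::'a ell2) = mkv (\<lambda>_. 0)" by (rule ell2_eqI) simp
    thus "(0::'a ell2) \<in> V" using K0 by (simp add: V_def)
  next
    fix a b assume "a \<in> V" "b \<in> V"
    then obtain ka kb where "ka \<in> K" "kb \<in> K" "a = mkv ka" "b = mkv kb" by (auto simp: V_def)
    moreover have "mkv ka + mkv kb = mkv (\<lambda>i. ka i + kb i)"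
      using calculation Kl2 by (intro mkv_add[symmetric]) auto
    ultimately show "a + b \<in> V" using Kadd by (auto simp: V_def)
  next
    fix c :: real and a assume "a \<in> V"
    then obtain ka where ka: "ka \<in> K" "a = mkv ka" by (auto simp: V_def)
    have kal2: "ka \<in> l2 UNIV" using ka Kl2 l2_UNIV by blast
    have "c *\<^sub>R mkv ka = mkv (\<lambda>i. complex_of_real c * ka i)"
      using kal2 l2_scale[OF kal2] by (intro ell2_eqI) simp
    thus "c *\<^sub>R a \<in> V" using Kscale ka by (auto simp: V_def)
  qed
  have cl: "closed V"
    unfolding closed_sequential_limits
  proof (intro allI impI)
    fix s l assume H: "(\<forall>n. s n \<in> V) \<and> s \<longlonglongrightarrow> l"
    hence "\<forall>n. \<exists>k. k \<in> K \<and> s n = mkv k" by (auto simp: V_def)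
    then obtain k where k: "\<And>n. k n \<in> K" "\<And>n. s n = mkv (k n)" by metis
    have kl2: "k n \<in> l2 J" for n using k Kl2 by blast
    have slim: "s \<longlonglongrightarrow> l" using H by blast
    have lz: "evec l i = 0" if i: "i \<notin> J" for i
    proof (rule ccontr)
      assume ne: "evec l i \<noteq> 0"
      hence "0 < cmod (evec l i)" by simp
      from LIMSEQ_D[OF slim this] obtain n where n: "norm (s n - l) < cmod (evec l i)" by blast
      have "cmod (evec (s n - l) i) \<le> norm (s n - l)" by (rule coord_le_norm)
      moreover have "evec (s n - l) i = - evec l i" using k(2)[of n] kl2[of n] i by (simp add: l2_out)
      ultimately show False using n by simp
    qed
    have ll2: "evec l \<in> l2 J" by (rule l2_UNIV_J) (simp_all add: lz)
    have "(\<lambda>n. l2_norm J (\<lambda>i. k n i - evec l i)) \<longlonglongrightarrow> 0"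
    proof -
      have "l2_norm J (\<lambda>i. k n i - evec l i) = norm (s n - l)" for n
      proof -
        have "mkv (\<lambda>i. k n i - evec l i) = s n - l"
          using mkv_diff[OF kl2[of n] ll2] k(2)[of n] by (simp add: evec_inverse)
        thus ?thesis using norm_mkv[OF l2_diff[OF kl2[of n] ll2]] by simp
      qed
      moreover have "(\<lambda>n. norm (s n - l)) \<longlonglongrightarrow> 0"
        by (intro tendsto_norm_zero LIM_zero slim)
      ultimately show ?thesis by simp
    qed
    hence "evec l \<in> K" using Klim k ll2 by blast
    thus "l \<in> V" unfolding V_def by (metis evec_inverse image_eqI)
  qed
  obtain p where pV: "p \<in> V" and orth: "\<forall>v\<in>V. inner (mkv y - p) v = 0"
    using proj_exists[OF cl sub, of "mkv y"] by blast
  have yl2: "y \<in> l2 J" using y l2_orth_sub by blast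
  obtain q where q: "q \<in> K" "p = mkv q" using pV by (auto simp: V_def)
  have ql2: "q \<in> l2 J" using q Kl2 by blast
  define w where "w = (\<lambda>i. y i - q i)"
  have wl2: "w \<in> l2 J" unfolding w_def using yl2 ql2 by (rule l2_diff)
  have mw: "mkv y - p = mkv w" using q yl2 ql2 by (simp add: w_def mkv_diff)
  have wperp: "w \<in> l2_orth J K"
    unfolding l2_orth_def
  proof (intro CollectI conjI ballI wl2)
    fix k assume k: "k \<in> K"
    have kl2: "k \<in> l2 J" using k Kl2 by blast
    have ik: "(\<lambda>i. \<i> * k i) \<in> K" using Kscale k by blast
    have ikl2: "(\<lambda>i. \<i> * k i) \<in> l2 J" using kl2 by (rule l2_scale)
    have "inner (mkv w) (mkv k) = 0" using orth k mw by (auto simp: V_def)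
    hence r1: "Re (l2_inner J w k) = 0" using wl2 kl2 by (simp add: inner_mkv)
    have "inner (mkv w) (mkv (\<lambda>i. \<i> * k i)) = 0" using orth ik mw by (auto simp: V_def)
    hence "Re (l2_inner J w (\<lambda>i. \<i> * k i)) = 0" using wl2 ikl2 by (simp add: inner_mkv)
    hence r2: "Im (l2_inner J w k) = 0" using wl2 kl2 by (simp add: l2_inner_scale_right)
    have "l2_inner J w k = 0" using r1 r2 by (simp add: complex_eq_iff)
    hence "cnj (l2_inner J w k) = 0" by simp
    thus "l2_inner J k w = 0" by (simp add: l2_inner_cnj)
  qed
  have wy: "l2_inner J w y = 0" using y wperp by (auto simp: l2_orth_def)
  have "l2_inner J q w = 0" using wperp q by (auto simp: l2_orth_def)
  hence wq: "l2_inner J w q = 0" by (metis l2_inner_cnj complex_cnj_zero)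
  have "l2_inner J w w = l2_inner J w y - l2_inner J w q"
    unfolding w_def by (rule l2_inner_diff_right[OF yl2 ql2]) (simp add: w_def[symmetric] wl2)
  hence "l2_inner J w w = 0" using wy wq by simp
  hence "w = (\<lambda>_. 0)" using wl2 l2_inner_self_0 by blast
  hence "y = q" by (auto simp: w_def fun_eq_iff)
  thus ?thesis using q by simp
qed


section \<open>H2 basics\<close>

definition Seq :: "'i set \<Rightarrow> (nat \<Rightarrow> 'i \<Rightarrow> complex) \<Rightarrow> bool" where
  "Seq I a \<longleftrightarrow> (\<forall>n. a n \<in> l2 I) \<and> summable (\<lambda>n. (l2_norm I (a n))^2)"

definition mkH :: "(nat \<Rightarrow> 'i \<Rightarrow> complex) \<Rightarrow> complex \<Rightarrow> 'i \<Rightarrow> complex" where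
  "mkH a = (\<lambda>z i. if z \<in> ball 0 1 then (\<Sum>n. a n i * z^n) else 0)"

lemma SeqD: "Seq I a \<Longrightarrow> a n \<in> l2 I" "Seq I a \<Longrightarrow> summable (\<lambda>n. (l2_norm I (a n))^2)"
  by (auto simp: Seq_def)

lemma Seq_norm_le: assumes "Seq I a"
  shows "l2_norm I (a n) \<le> sqrt (\<Sum>n. (l2_norm I (a n))^2)"
proof -
  have "sum (\<lambda>n. (l2_norm I (a n))^2) {n} \<le> (\<Sum>n. (l2_norm I (a n))^2)"
    using assms by (intro sum_le_suminf) (auto simp: Seq_def)
  hence "(l2_norm I (a n))^2 \<le> (\<Sum>n. (l2_norm I (a n))^2)" by simp
  thus ?thesis using l2_norm_nonneg real_le_rsqrt by blast
qed

lemma Seq_coord_le: assumes "Seq I a"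
  shows "cmod (a n i) \<le> sqrt (\<Sum>n. (l2_norm I (a n))^2)"
  using l2_coord_le[OF SeqD(1)[OF assms]] Seq_norm_le[OF assms] order_trans by blast

lemma ps_summable: assumes a: "Seq I a" and z: "z \<in> ball 0 1"
  shows "summable (\<lambda>n. a n i * z^n)"
proof (rule summable_comparison_test)
  define B where "B = sqrt (\<Sum>n. (l2_norm I (a n))^2)"
  have nz: "norm z < 1" using z by simp
  show "summable (\<lambda>n. B * norm z ^ n)"
    using nz by (intro summable_mult summable_geometric) simp
  show "\<exists>N. \<forall>n\<ge>N. norm (a n i * z ^ n) \<le> B * norm z ^ n"
    using Seq_coord_le[OF a] by (auto simp: B_def norm_mult norm_power intro!: mult_right_mono)
qed

lemma mkH_sums: assumes "Seq I a" "z \<in> ball 0 1"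
  shows "(\<lambda>n. a n i * z^n) sums (mkH a z i)"
  using ps_summable[OF assms] assms(2) by (simp add: mkH_def summable_sums)

lemma mkH_out: "z \<notin> ball 0 1 \<Longrightarrow> mkH a z = (\<lambda>_. 0)"
  by (simp add: mkH_def fun_eq_iff)

lemma mkH_H2: assumes "Seq I a" shows "mkH a \<in> H2 I"
  unfolding H2_def
proof (intro CollectI conjI allI impI exI[of _ a] ballI)
  show "(\<lambda>n. a n i * z ^ n) sums mkH a z i" if "z \<in> ball 0 1" for z i
    using mkH_sums[OF assms that] .
qed (use assms in \<open>auto simp: Seq_def mkH_def\<close>)

lemma H2_mkH: assumes "F \<in> H2 I" shows "\<exists>a. Seq I a \<and> F = mkH a"
proof -
  from assms obtain a where out: "\<forall>z. z \<notin> ball 0 1 \<longrightarrow> F z = (\<lambda>_. 0)"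
    and a: "\<forall>n. a n \<in> l2 I" "summable (\<lambda>n. (l2_norm I (a n))^2)"
    and s: "\<forall>z\<in>ball 0 1. \<forall>i. (\<lambda>n. a n i * z ^ n) sums (F z i)"
    unfolding H2_def by blast
  have Sa: "Seq I a" using a by (simp add: Seq_def)
  have "F = mkH a"
  proof (intro ext)
    fix z i
    show "F z i = mkH a z i"
    proof (cases "z \<in> ball 0 1")
      case True
      then show ?thesis using s mkH_sums[OF Sa True] sums_unique2 by blast
    qed (use out in \<open>auto simp: mkH_def\<close>)
  qed
  thus ?thesis using Sa by blast
qed

lemma coeff_mkH: assumes a: "Seq I a" shows "h2_coeff (mkH a) n = a n"
proof
  fix i
  define A where "A = Abs_fps (\<lambda>n. a n i)"
  define f where "f = (\<lambda>z. mkH a z i)"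
  have "f has_fps_expansion A"
    unfolding has_fps_expansion_def
  proof
    have "summable (\<lambda>n. a n i * (1/2 :: complex) ^ n)"
      using a by (intro ps_summable) auto
    hence "fps_conv_radius A \<ge> norm (1/2 :: complex)"
      unfolding fps_conv_radius_def A_def by (intro conv_radius_geI) simp
    thus "0 < fps_conv_radius A" by (simp add: zero_less_iff_neq_zero order_less_le_trans[of 0 "ereal (1/2)"])
    have "eventually (\<lambda>z. z \<in> ball 0 1) (nhds (0::complex))"
      by (intro eventually_nhds_in_open) auto
    thus "eventually (\<lambda>z. eval_fps A z = f z) (nhds 0)"
    proof eventually_elim
      case (elim z)
      thus ?case using mkH_sums[OF a elim, of i]
        by (simp add: eval_fps_def A_def f_def sums_iff)
    qed
  qed
  from fps_nth_fps_expansion[OF this, of n]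
  show "h2_coeff (mkH a) n i = a n i"
    by (simp add: h2_coeff_def A_def f_def)
qed

lemma Seq_0[simp]: "Seq I (\<lambda>n i. 0)"
  by (simp add: Seq_def l2_norm_def)

lemma mkH_0: "mkH (\<lambda>n i. 0) = (\<lambda>_ _. 0)"
  by (simp add: mkH_def fun_eq_iff)

lemma sq_le2: "(u + v)^2 \<le> 2 * u^2 + 2 * v^2" for u v :: real
proof -
  have "0 \<le> (u - v)^2" by simp
  thus ?thesis by (simp add: power2_diff power2_sum)
qed

lemma Seq_add: assumes "Seq I a" "Seq I b" shows "Seq I (\<lambda>n i. a n i + b n i)"
  unfolding Seq_def
proof (intro conjI allI)
  show "(\<lambda>i. a n i + b n i) \<in> l2 I" for n using assms by (intro l2_add SeqD)
  show "summable (\<lambda>n. (l2_norm I (\<lambda>i. a n i + b n i))^2)"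
  proof (rule summable_comparison_test)
    show "summable (\<lambda>n. 2 * (l2_norm I (a n))^2 + 2 * (l2_norm I (b n))^2)"
      using assms by (intro summable_add summable_mult SeqD)
    have "(l2_norm I (\<lambda>i. a n i + b n i))^2 \<le> 2 * (l2_norm I (a n))^2 + 2 * (l2_norm I (b n))^2" for n
    proof -
      have "l2_norm I (\<lambda>i. a n i + b n i) \<le> l2_norm I (a n) + l2_norm I (b n)"
        using assms by (intro l2_triangle SeqD)
      hence "(l2_norm I (\<lambda>i. a n i + b n i))^2 \<le> (l2_norm I (a n) + l2_norm I (b n))^2"
        using l2_norm_nonneg by (intro power_mono) auto
      thus ?thesis using sq_le2 order_trans by blast
    qed
    thus "\<exists>N. \<forall>n\<ge>N. norm ((l2_norm I (\<lambda>i. a n i + b n i))^2) \<le> 2 * (l2_norm I (a n))^2 + 2 * (l2_norm I (b n))^2"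
      by simp
  qed
qed

lemma Seq_scale: assumes "Seq I a" shows "Seq I (\<lambda>n i. c * a n i)"
  unfolding Seq_def
proof (intro conjI allI)
  show "(\<lambda>i. c * a n i) \<in> l2 I" for n using assms by (intro l2_scale SeqD)
  have "summable (\<lambda>n. (cmod c)^2 * (l2_norm I (a n))^2)"
    using assms by (intro summable_mult SeqD)
  thus "summable (\<lambda>n. (l2_norm I (\<lambda>i. c * a n i))^2)"
    by (simp add: l2_norm_scale power_mult_distrib)
qed

lemma Seq_diff: assumes "Seq I a" "Seq I b" shows "Seq I (\<lambda>n i. a n i - b n i)"
  using Seq_add[OF assms(1) Seq_scale[OF assms(2), of "-1"]] by simp

lemma mkH_add: assumes "Seq I a" "Seq I b"
  shows "mkH (\<lambda>n i. a n i + b n i) = (\<lambda>z i. mkH a z i + mkH b z i)"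
proof (intro ext)
  fix z i
  show "mkH (\<lambda>n i. a n i + b n i) z i = mkH a z i + mkH b z i"
  proof (cases "z \<in> ball 0 1")
    case True
    have "(\<lambda>n. a n i * z^n + b n i * z^n) sums (mkH a z i + mkH b z i)"
      by (intro sums_add mkH_sums[OF assms(1) True] mkH_sums[OF assms(2) True])
    moreover have "(\<lambda>n. (a n i + b n i) * z^n) sums (mkH (\<lambda>n i. a n i + b n i) z i)"
      by (rule mkH_sums[OF Seq_add[OF assms] True])
    ultimately show ?thesis by (simp add: distrib_right sums_unique2)
  qed (simp add: mkH_out)
qed

lemma mkH_scale: assumes "Seq I a"
  shows "mkH (\<lambda>n i. c * a n i) = (\<lambda>z i. c * mkH a z i)"
proof (intro ext)
  fix z i
  show "mkH (\<lambda>n i. c * a n i) z i = c * mkH a z i"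
  proof (cases "z \<in> ball 0 1")
    case True
    have "(\<lambda>n. c * (a n i * z^n)) sums (c * mkH a z i)"
      by (intro sums_mult mkH_sums[OF assms(1) True])
    moreover have "(\<lambda>n. (c * a n i) * z^n) sums (mkH (\<lambda>n i. c * a n i) z i)"
      by (rule mkH_sums[OF Seq_scale[OF assms] True])
    ultimately show ?thesis by (simp add: mult.assoc sums_unique2)
  qed (simp add: mkH_out)
qed

lemma mkH_diff: assumes "Seq I a" "Seq I b"
  shows "mkH (\<lambda>n i. a n i - b n i) = (\<lambda>z i. mkH a z i - mkH b z i)"
proof -
  have "mkH (\<lambda>n i. a n i + (-1) * b n i) = (\<lambda>z i. mkH a z i + mkH (\<lambda>n i. (-1) * b n i) z i)"
    by (rule mkH_add[OF assms(1) Seq_scale[OF assms(2)]])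
  also have "\<dots> = (\<lambda>z i. mkH a z i + (-1) * mkH b z i)"
    by (simp only: mkH_scale[OF assms(2)])
  finally show ?thesis by simp
qed

lemma mkH_inj: assumes "Seq I a" "Seq I b" "mkH a = mkH b" shows "a = b"
  using coeff_mkH[OF assms(1)] coeff_mkH[OF assms(2)] assms(3) by (metis ext)

lemma inner_summable: assumes a: "Seq I a" and b: "Seq I b"
  shows "summable (\<lambda>n. l2_inner I (a n) (b n))"
proof (rule summable_comparison_test)
  show "summable (\<lambda>n. (l2_norm I (a n))^2 + (l2_norm I (b n))^2)"
    using assms by (intro summable_add SeqD)
  have "norm (l2_inner I (a n) (b n)) \<le> (l2_norm I (a n))^2 + (l2_norm I (b n))^2" for n
  proof -
    have "norm (l2_inner I (a n) (b n)) \<le> l2_norm I (a n) * l2_norm I (b n)"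
      using assms by (intro l2_cs SeqD)
    also have "\<dots> \<le> (l2_norm I (a n))^2 + (l2_norm I (b n))^2"
    proof -
      have "0 \<le> (l2_norm I (a n) - l2_norm I (b n))^2" by simp
      hence "2 * (l2_norm I (a n) * l2_norm I (b n)) \<le> (l2_norm I (a n))^2 + (l2_norm I (b n))^2"
        by (simp add: power2_diff)
      moreover have "0 \<le> l2_norm I (a n) * l2_norm I (b n)" by (intro mult_nonneg_nonneg l2_norm_nonneg)
      ultimately show ?thesis by linarith
    qed
    finally show ?thesis .
  qed
  thus "\<exists>N. \<forall>n\<ge>N. norm (l2_inner I (a n) (b n)) \<le> (l2_norm I (a n))^2 + (l2_norm I (b n))^2" by blast
qed

lemma h2_inner_mkH: assumes "Seq I a" "Seq I b"
  shows "h2_inner I (mkH a) (mkH b) = (\<Sum>n. l2_inner I (a n) (b n))"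
  by (simp add: h2_inner_def coeff_mkH[OF assms(1)] coeff_mkH[OF assms(2)])

lemma h2_norm_mkH: assumes "Seq I a"
  shows "h2_norm I (mkH a) = sqrt (\<Sum>n. (l2_norm I (a n))^2)"
  by (simp add: h2_norm_def coeff_mkH[OF assms(1)])


definition cf :: "(nat \<Rightarrow> 'i \<Rightarrow> complex) \<Rightarrow> nat \<times> 'i \<Rightarrow> complex" where
  "cf a = (\<lambda>(n,i). a n i)"
definition uncf :: "(nat \<times> 'i \<Rightarrow> complex) \<Rightarrow> nat \<Rightarrow> 'i \<Rightarrow> complex" where
  "uncf x = (\<lambda>n i. x (n,i))"

lemma cf_uncf[simp]: "cf (uncf x) = x" by (simp add: cf_def uncf_def)
lemma uncf_cf[simp]: "uncf (cf a) = a" by (simp add: cf_def uncf_def)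
lemma cf_app[simp]: "cf a (n,i) = a n i" by (simp add: cf_def)

lemma cf_l2: assumes a: "Seq I a" shows "cf a \<in> l2 (UNIV \<times> I)"
proof (rule l2_memI)
  fix p :: "nat \<times> 'a" assume "p \<notin> UNIV \<times> I"
  thus "cf a p = 0" by (cases p) (auto simp: l2_out[OF SeqD(1)[OF a]])
next
  show "(\<lambda>p. (cmod (cf a p))^2) summable_on UNIV \<times> I"
  proof (rule summable_on_SigmaI[where g="\<lambda>n. (l2_norm I (a n))^2"])
    fix n :: nat
    show "((\<lambda>i. (cmod (cf a (n, i)))^2) has_sum (l2_norm I (a n))^2) I"
      using has_sum_infsum[OF l2_sq[OF SeqD(1)[OF a, of n]]] by (simp add: l2_norm_sq)
  next
    show "(\<lambda>n. (l2_norm I (a n))^2) summable_on UNIV"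
      by (rule summable_nonneg_imp_summable_on[OF SeqD(2)[OF a]]) simp
  qed simp
qed

lemma uncf_Seq: assumes x: "x \<in> l2 (UNIV \<times> I)" shows "Seq I (uncf x)"
proof -
  have sq: "(\<lambda>p. (cmod (x p))^2) summable_on UNIV \<times> I" using l2_sq[OF x] .
  have sq': "(\<lambda>(n,i). (cmod (x (n,i)))^2) summable_on Sigma UNIV (\<lambda>_. I)"
    using sq by (simp add: case_prod_beta')
  have row: "(\<lambda>i. (cmod (x (n,i)))^2) summable_on I" for n
    using summable_on_SigmaD1[OF sq', of n] by simp
  have rowl2: "uncf x n \<in> l2 I" for n
    by (rule l2_memI) (use row l2_out[OF x] in \<open>auto simp: uncf_def\<close>)
  have "(\<lambda>n. infsum (\<lambda>i. (cmod (x (n,i)))^2) I) summable_on UNIV"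
    using summable_on_SigmaD[where f="\<lambda>p. (cmod (x p))^2" and A=UNIV and B="\<lambda>_. I"] sq row by simp
  hence "summable (\<lambda>n. infsum (\<lambda>i. (cmod (x (n,i)))^2) I)"
    by (rule summable_on_imp_summable)
  hence "summable (\<lambda>n. (l2_norm I (uncf x n))^2)"
    by (simp add: l2_norm_sq uncf_def)
  thus ?thesis using rowl2 by (simp add: Seq_def)
qed

lemma infsum_nat_suminf: fixes g :: "nat \<Rightarrow> complex"
  assumes "g summable_on UNIV" shows "infsum g UNIV = suminf g"
  using has_sum_imp_sums[OF has_sum_infsum[OF assms]] sums_unique by metis

lemma cf_inner: assumes a: "Seq I a" and b: "Seq I b"
  shows "l2_inner (UNIV \<times> I) (cf a) (cf b) = (\<Sum>n. l2_inner I (a n) (b n))"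
proof -
  have S: "(\<lambda>p. cf a p * cnj (cf b p)) summable_on UNIV \<times> I"
    by (rule l2_prod_summable[OF cf_l2[OF a] cf_l2[OF b]])
  have "l2_inner (UNIV \<times> I) (cf a) (cf b) = infsum (\<lambda>n. infsum (\<lambda>i. cf a (n,i) * cnj (cf b (n,i))) I) UNIV"
    unfolding l2_inner_def by (rule infsum_Sigma_banach[OF S, symmetric])
  also have "\<dots> = infsum (\<lambda>n. l2_inner I (a n) (b n)) UNIV"
    by (simp add: l2_inner_def)
  also have "\<dots> = (\<Sum>n. l2_inner I (a n) (b n))"
  proof (rule infsum_nat_suminf)
    have eqf: "(\<lambda>p. cf a p * cnj (cf b p)) = (\<lambda>(n,i). a n i * cnj (b n i))"
      by (auto simp: fun_eq_iff cf_def)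
    have "(\<lambda>n. infsum (\<lambda>i. a n i * cnj (b n i)) I) summable_on UNIV"
      by (rule summable_on_Sigma_banach[OF S[unfolded eqf]])
    thus "(\<lambda>n. l2_inner I (a n) (b n)) summable_on UNIV" by (simp add: l2_inner_def)
  qed
  finally show ?thesis .
qed

lemma cf_norm: assumes a: "Seq I a"
  shows "l2_norm (UNIV \<times> I) (cf a) = sqrt (\<Sum>n. (l2_norm I (a n))^2)"
proof -
  have "complex_of_real ((l2_norm (UNIV \<times> I) (cf a))^2) = (\<Sum>n. l2_inner I (a n) (a n))"
    using cf_inner[OF a a] l2_inner_self[OF cf_l2[OF a]] by simp
  also have "\<dots> = (\<Sum>n. complex_of_real ((l2_norm I (a n))^2))"
    using l2_inner_self[OF SeqD(1)[OF a]] by simp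
  also have "\<dots> = complex_of_real (\<Sum>n. (l2_norm I (a n))^2)"
    by (rule suminf_of_real[OF SeqD(2)[OF a], symmetric])
  finally have "(l2_norm (UNIV \<times> I) (cf a))^2 = (\<Sum>n. (l2_norm I (a n))^2)"
    using of_real_eq_iff by blast
  thus ?thesis using l2_norm_nonneg by (metis real_sqrt_unique)
qed

lemma H2_co: assumes "F \<in> H2 I" shows "Seq I (h2_coeff F)" "F = mkH (h2_coeff F)"
proof -
  from H2_mkH[OF assms] obtain a where a: "Seq I a" "F = mkH a" by blast
  have "h2_coeff F = a" by (rule ext) (simp add: a(2) coeff_mkH[OF a(1)])
  thus "Seq I (h2_coeff F)" "F = mkH (h2_coeff F)" using a by auto
qed

lemma h2_inner_cf: assumes "F \<in> H2 I" "G \<in> H2 I"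
  shows "h2_inner I F G = l2_inner (UNIV \<times> I) (cf (h2_coeff F)) (cf (h2_coeff G))"
  using cf_inner[OF H2_co(1)[OF assms(1)] H2_co(1)[OF assms(2)]] by (simp add: h2_inner_def)

lemma h2_norm_cf: assumes "F \<in> H2 I"
  shows "h2_norm I F = l2_norm (UNIV \<times> I) (cf (h2_coeff F))"
  using cf_norm[OF H2_co(1)[OF assms]] by (simp add: h2_norm_def)

theorem h2_orth_orth:
  assumes M: "h2_closed_subspace I M" and G: "G \<in> h2_orth I (h2_orth I M)"
  shows "G \<in> M"
proof -
  have MH: "M \<subseteq> H2 I" and M0: "(\<lambda>_ _. 0) \<in> M"
    and Madd: "\<And>F G. F \<in> M \<Longrightarrow> G \<in> M \<Longrightarrow> (\<lambda>z i. F z i + G z i) \<in> M"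
    and Mscale: "\<And>c F. F \<in> M \<Longrightarrow> (\<lambda>z i. c * F z i) \<in> M"
    and Mlim: "\<And>s F. (\<forall>n. s n \<in> M) \<Longrightarrow> F \<in> H2 I \<Longrightarrow> (\<lambda>n. h2_norm I (\<lambda>z i. s n z i - F z i)) \<longlonglongrightarrow> 0 \<Longrightarrow> F \<in> M"
    using M unfolding h2_closed_subspace_def by blast+
  define cfH :: "(complex \<Rightarrow> 'a \<Rightarrow> complex) \<Rightarrow> nat \<times> 'a \<Rightarrow> complex" where "cfH F = cf (h2_coeff F)" for F
  define K where "K = cfH ` M"
  have GH: "G \<in> H2 I" using G by (simp add: h2_orth_def)
  have cfH_mkH: "cfH (mkH a) = cf a" if "Seq I a" for a using coeff_mkH[OF that] by (simp add: cfH_def fun_eq_iff)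
  have cfH_l2: "cfH F \<in> l2 (UNIV \<times> I)" if "F \<in> H2 I" for F
    unfolding cfH_def by (rule cf_l2[OF H2_co(1)[OF that]])
  have Kcl: "l2_closed_subspace (UNIV \<times> I) K"
    unfolding l2_closed_subspace_def
  proof (intro conjI allI ballI impI)
    show "K \<subseteq> l2 (UNIV \<times> I)" using MH cfH_l2 by (auto simp: K_def)
    have z: "(\<lambda>(n::nat, i::'a). (0::complex)) = (\<lambda>_. 0)" by auto
    have fe: "cfH (\<lambda>_ _. 0) = (\<lambda>_. 0)"
      using cfH_mkH[OF Seq_0] by (simp add: mkH_0 cf_def z)
    show "(\<lambda>_. 0) \<in> K" unfolding K_def
      by (rule image_eqI[OF _ M0]) (rule fe[symmetric])
  next
    fix x y assume "x \<in> K" "y \<in> K"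
    then obtain F1 F2 where F: "F1 \<in> M" "F2 \<in> M" "x = cfH F1" "y = cfH F2" by (auto simp: K_def)
    obtain a1 where S1: "Seq I a1" and F1: "F1 = mkH a1" using H2_mkH F(1) MH by blast
    obtain a2 where S2: "Seq I a2" and F2: "F2 = mkH a2" using H2_mkH F(2) MH by blast
    have e: "(\<lambda>z i. F1 z i + F2 z i) = mkH (\<lambda>n i. a1 n i + a2 n i)"
      unfolding F1 F2 by (rule mkH_add[OF S1 S2, symmetric])
    have "cfH (\<lambda>z i. F1 z i + F2 z i) = cf (\<lambda>n i. a1 n i + a2 n i)"
      by (simp only: e cfH_mkH[OF Seq_add[OF S1 S2]])
    also have "\<dots> = (\<lambda>p. x p + y p)"
      using F(3,4) cfH_mkH[OF S1] cfH_mkH[OF S2] unfolding F1 F2 by (auto simp: cf_def)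
    finally have fe: "cfH (\<lambda>z i. F1 z i + F2 z i) = (\<lambda>p. x p + y p)" .
    show "(\<lambda>p. x p + y p) \<in> K" unfolding K_def
      by (rule image_eqI[OF _ Madd[OF F(1,2)]]) (rule fe[symmetric])
  next
    fix c x assume "x \<in> K"
    then obtain F1 where F: "F1 \<in> M" "x = cfH F1" by (auto simp: K_def)
    obtain a1 where S1: "Seq I a1" and F1: "F1 = mkH a1" using H2_mkH F(1) MH by blast
    have e: "(\<lambda>z i. c * F1 z i) = mkH (\<lambda>n i. c * a1 n i)"
      unfolding F1 by (rule mkH_scale[OF S1, symmetric])
    have "cfH (\<lambda>z i. c * F1 z i) = cf (\<lambda>n i. c * a1 n i)"
      by (simp only: e cfH_mkH[OF Seq_scale[OF S1]])
    also have "\<dots> = (\<lambda>p. c * x p)"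
      using F(2) cfH_mkH[OF S1] unfolding F1 by (auto simp: cf_def)
    finally have fe: "cfH (\<lambda>z i. c * F1 z i) = (\<lambda>p. c * x p)" .
    show "(\<lambda>p. c * x p) \<in> K" unfolding K_def
      by (rule image_eqI[OF _ Mscale[OF F(1)]]) (rule fe[symmetric])
  next
    fix s x assume H: "(\<forall>n. s n \<in> K) \<and> x \<in> l2 (UNIV \<times> I) \<and> (\<lambda>n. l2_norm (UNIV \<times> I) (\<lambda>i. s n i - x i)) \<longlonglongrightarrow> 0"
    hence "\<forall>n. \<exists>F. F \<in> M \<and> s n = cfH F" by (auto simp: K_def)
    then obtain F where F: "\<And>n. F n \<in> M" "\<And>n. s n = cfH (F n)" by metis
    have x: "x \<in> l2 (UNIV \<times> I)" using H by blast
    define b where "b = uncf x"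
    have Sb: "Seq I b" using uncf_Seq[OF x] by (simp add: b_def)
    have eq: "h2_norm I (\<lambda>z i. F n z i - mkH b z i) = l2_norm (UNIV \<times> I) (\<lambda>p. s n p - x p)" for n
    proof -
      obtain a where Sa: "Seq I a" and Fa: "F n = mkH a" using H2_mkH F(1)[of n] MH by blast
      have "(\<lambda>z i. F n z i - mkH b z i) = mkH (\<lambda>m i. a m i - b m i)"
        unfolding Fa by (rule mkH_diff[OF Sa Sb, symmetric])
      hence "h2_norm I (\<lambda>z i. F n z i - mkH b z i) = sqrt (\<Sum>m. (l2_norm I (\<lambda>i. a m i - b m i))^2)"
        using h2_norm_mkH[OF Seq_diff[OF Sa Sb]] by simp
      also have "\<dots> = l2_norm (UNIV \<times> I) (cf (\<lambda>m i. a m i - b m i))"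
        using cf_norm[OF Seq_diff[OF Sa Sb]] by simp
      also have "cf (\<lambda>m i. a m i - b m i) = (\<lambda>p. s n p - x p)"
        using F(2)[of n] cfH_mkH[OF Sa] unfolding Fa by (auto simp: cf_def b_def uncf_def)
      finally show ?thesis .
    qed
    have "mkH b \<in> M"
      by (rule Mlim[of F]) (use F mkH_H2[OF Sb] H eq in auto)
    moreover have "cfH (mkH b) = x" using cfH_mkH[OF Sb] by (simp add: b_def)
    ultimately show "x \<in> K" unfolding K_def by (intro image_eqI[where x="mkH b"]) auto
  qed
  have "cfH G \<in> l2_orth (UNIV \<times> I) (l2_orth (UNIV \<times> I) K)"
    unfolding l2_orth_def[of _ "l2_orth _ K"]
  proof (intro CollectI conjI ballI)
    show "cfH G \<in> l2 (UNIV \<times> I)" by (rule cfH_l2[OF GH])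
    fix y assume y: "y \<in> l2_orth (UNIV \<times> I) K"
    have yl2: "y \<in> l2 (UNIV \<times> I)" using y by (simp add: l2_orth_def)
    define N where "N = mkH (uncf y)"
    have SN: "Seq I (uncf y)" by (rule uncf_Seq[OF yl2])
    have NH: "N \<in> H2 I" unfolding N_def by (rule mkH_H2[OF SN])
    have cN: "cfH N = y" using cfH_mkH[OF SN] by (simp add: N_def)
    have "N \<in> h2_orth I M"
      unfolding h2_orth_def
    proof (intro CollectI conjI ballI NH)
      fix F assume F: "F \<in> M"
      have "h2_inner I F N = l2_inner (UNIV \<times> I) (cfH F) (cfH N)"
        using h2_inner_cf[OF _ NH, of F] F MH by (auto simp: cfH_def)
      also have "\<dots> = 0" using y F cN by (auto simp: l2_orth_def K_def)
      finally show "h2_inner I F N = 0" .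
    qed
    hence "h2_inner I N G = 0" using G by (simp add: h2_orth_def)
    thus "l2_inner (UNIV \<times> I) y (cfH G) = 0"
      using h2_inner_cf[OF NH GH] cN by (simp add: cfH_def)
  qed
  hence "cfH G \<in> K" by (rule l2_orth_orth[OF Kcl])
  then obtain F where F: "F \<in> M" "cfH G = cfH F" by (auto simp: K_def)
  hence "h2_coeff G = h2_coeff F" unfolding cfH_def by (metis uncf_cf)
  moreover have "G = mkH (h2_coeff G)" by (rule H2_co(2)[OF GH])
  moreover have "F = mkH (h2_coeff F)" using H2_co(2)[of F I] F MH by blast
  ultimately have "G = F" by metis
  thus ?thesis using F by simp
qed


instance ell2 :: (type) banach ..

section \<open>Linear operators\<close>

lemma lin_l2: "l2_linear I T \<Longrightarrow> x \<in> l2 I \<Longrightarrow> T x \<in> l2 I"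
  by (simp add: l2_linear_def)
lemma lin_add: "l2_linear I T \<Longrightarrow> x \<in> l2 I \<Longrightarrow> y \<in> l2 I \<Longrightarrow> T (\<lambda>i. x i + y i) = (\<lambda>i. T x i + T y i)"
  by (simp add: l2_linear_def)
lemma lin_scale: "l2_linear I T \<Longrightarrow> x \<in> l2 I \<Longrightarrow> T (\<lambda>i. c * x i) = (\<lambda>i. c * T x i)"
  by (simp add: l2_linear_def)
lemma lin_0: assumes "l2_linear I T" shows "T (\<lambda>_. 0) = (\<lambda>_. 0)"
  using lin_scale[OF assms l2_0, of 0] by simp
lemma lin_diff: assumes "l2_linear I T" "x \<in> l2 I" "y \<in> l2 I"
  shows "T (\<lambda>i. x i - y i) = (\<lambda>i. T x i - T y i)"
proof -
  have "T (\<lambda>i. x i + (-1) * y i) = (\<lambda>i. T x i + T (\<lambda>i. (-1) * y i) i)"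
    using assms by (intro lin_add l2_scale)
  also have "T (\<lambda>i. (-1) * y i) = (\<lambda>i. (-1) * T y i)" using assms by (intro lin_scale)
  finally show ?thesis by simp
qed

definition blin :: "'i set \<Rightarrow> (('i \<Rightarrow> complex) \<Rightarrow> ('i \<Rightarrow> complex)) \<Rightarrow> bool" where
  "blin I T \<longleftrightarrow> l2_linear I T \<and> (\<exists>C. \<forall>x\<in>l2 I. l2_norm I (T x) \<le> C * l2_norm I x)"

lemma blin_lin: "blin I T \<Longrightarrow> l2_linear I T" by (simp add: blin_def)

lemma blin_comp: assumes "blin I T" "blin I S" shows "blin I (\<lambda>x. T (S x))"
proof -
  obtain C where C: "\<forall>x\<in>l2 I. l2_norm I (T x) \<le> C * l2_norm I x" using assms(1) by (auto simp: blin_def)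
  obtain D where D: "\<forall>x\<in>l2 I. l2_norm I (S x) \<le> D * l2_norm I x" using assms(2) by (auto simp: blin_def)
  have lT: "l2_linear I T" and lS: "l2_linear I S" using assms by (auto simp: blin_def)
  have "l2_norm I (T (S x)) \<le> (\<bar>C\<bar> * \<bar>D\<bar>) * l2_norm I x" if x: "x \<in> l2 I" for x
  proof -
    have Sx: "S x \<in> l2 I" using lS x by (rule lin_l2)
    have "l2_norm I (T (S x)) \<le> C * l2_norm I (S x)" using C Sx by blast
    also have "\<dots> \<le> \<bar>C\<bar> * l2_norm I (S x)" using l2_norm_nonneg by (intro mult_right_mono) auto
    also have "\<dots> \<le> \<bar>C\<bar> * (D * l2_norm I x)" using D x by (intro mult_left_mono) auto
    also have "\<dots> \<le> \<bar>C\<bar> * (\<bar>D\<bar> * l2_norm I x)" using l2_norm_nonneg by (intro mult_left_mono mult_right_mono) auto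
    finally show ?thesis by (simp add: mult.assoc)
  qed
  moreover have "l2_linear I (\<lambda>x. T (S x))"
    using lT lS unfolding l2_linear_def by (auto simp: lin_l2[OF lS])
  ultimately show ?thesis unfolding blin_def by blast
qed

lemma blin_id: "blin I (\<lambda>x. x)"
  unfolding blin_def l2_linear_def by (auto intro!: exI[of _ 1])

lemma blin_diff: assumes "blin I T" "blin I S" shows "blin I (\<lambda>x i. T x i - S x i)"
proof -
  obtain C where C: "\<forall>x\<in>l2 I. l2_norm I (T x) \<le> C * l2_norm I x" using assms(1) by (auto simp: blin_def)
  obtain D where D: "\<forall>x\<in>l2 I. l2_norm I (S x) \<le> D * l2_norm I x" using assms(2) by (auto simp: blin_def)
  have lT: "l2_linear I T" and lS: "l2_linear I S" using assms by (auto simp: blin_def)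
  have "l2_norm I (\<lambda>i. T x i - S x i) \<le> (C + D) * l2_norm I x" if x: "x \<in> l2 I" for x
  proof -
    have "l2_norm I (\<lambda>i. T x i + (-1) * S x i) \<le> l2_norm I (T x) + l2_norm I (\<lambda>i. (-1) * S x i)"
      using x by (intro l2_triangle lin_l2[OF lT] l2_scale lin_l2[OF lS])
    also have "l2_norm I (\<lambda>i. (-1) * S x i) = l2_norm I (S x)" by (simp add: l2_norm_scale[of I "-1", simplified])
    finally have "l2_norm I (\<lambda>i. T x i - S x i) \<le> l2_norm I (T x) + l2_norm I (S x)" by simp
    thus ?thesis using C D x by (simp add: distrib_right) (smt (verit) C D)
  qed
  moreover have "l2_linear I (\<lambda>x i. T x i - S x i)"
    unfolding l2_linear_def
  proof (intro conjI ballI allI)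
    fix x assume x: "x \<in> l2 I"
    show "(\<lambda>i. T x i - S x i) \<in> l2 I" using x by (intro l2_diff lin_l2[OF lT] lin_l2[OF lS])
    fix y assume y: "y \<in> l2 I"
    show "(\<lambda>i. T (\<lambda>i. x i + y i) i - S (\<lambda>i. x i + y i) i) = (\<lambda>i. (T x i - S x i) + (T y i - S y i))"
      using lin_add[OF lT x y] lin_add[OF lS x y] by (simp add: algebra_simps)
  next
    fix c x assume x: "x \<in> l2 I"
    show "(\<lambda>i. T (\<lambda>i. c * x i) i - S (\<lambda>i. c * x i) i) = (\<lambda>i. c * (T x i - S x i))"
      using lin_scale[OF lT x] lin_scale[OF lS x] by (simp add: algebra_simps)
  qed
  ultimately show ?thesis unfolding blin_def by blast
qed

section \<open>Series through bounded operators\<close>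

lemma bounded_linear_coord: "bounded_linear (\<lambda>v::'a ell2. evec v i)"
proof (rule bounded_linear_intro[where K=1])
  fix x y :: "'a ell2" and r :: real
  show "evec (x + y) i = evec x i + evec y i" by simp
  show "evec (r *\<^sub>R x) i = r *\<^sub>R evec x i" by (simp add: scaleR_conv_of_real)
  show "norm (evec x i) \<le> norm x * 1" using coord_le_norm by simp
qed

definition restr :: "'i set \<Rightarrow> ('i \<Rightarrow> complex) \<Rightarrow> 'i \<Rightarrow> complex" where
  "restr I w = (\<lambda>i. if i \<in> I then w i else 0)"

lemma restr_l2: assumes "w \<in> l2 UNIV" shows "restr I w \<in> l2 I"
proof (rule l2_memI)
  have "(\<lambda>i. (cmod (w i))^2) summable_on I" by (rule summable_on_subset[OF l2_sq[OF assms] subset_UNIV])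
  thus "(\<lambda>i. (cmod (restr I w i))^2) summable_on I"
    by (rule summable_on_cong[THEN iffD1, rotated]) (simp add: restr_def)
qed (simp add: restr_def)

lemma restr_norm: assumes "w \<in> l2 UNIV" shows "l2_norm I (restr I w) \<le> l2_norm UNIV w"
proof -
  have "infsum (\<lambda>i. (cmod (restr I w i))^2) I = infsum (\<lambda>i. (cmod (w i))^2) I"
    by (rule infsum_cong) (simp add: restr_def)
  also have "\<dots> \<le> infsum (\<lambda>i. (cmod (w i))^2) UNIV"
    by (rule infsum_mono_neutral) (auto intro: summable_on_subset[OF l2_sq[OF assms] subset_UNIV] l2_sq[OF assms])
  finally show ?thesis unfolding l2_norm_def by simp
qed

lemma restr_id: "x \<in> l2 I \<Longrightarrow> restr I x = x"
  by (auto simp: restr_def fun_eq_iff l2_out)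

definition liftT :: "'i set \<Rightarrow> (('i \<Rightarrow> complex) \<Rightarrow> ('i \<Rightarrow> complex)) \<Rightarrow> 'i ell2 \<Rightarrow> 'i ell2" where
  "liftT I T v = mkv (T (restr I (evec v)))"

lemma bounded_linear_lift: assumes "blin I T" shows "bounded_linear (liftT I T)"
proof -
  obtain C where C: "\<forall>x\<in>l2 I. l2_norm I (T x) \<le> C * l2_norm I x" using assms by (auto simp: blin_def)
  have lT: "l2_linear I T" using assms by (simp add: blin_def)
  have R: "restr I (evec v) \<in> l2 I" for v :: "'a ell2" by (rule restr_l2) simp
  show ?thesis
  proof (rule bounded_linear_intro[where K="\<bar>C\<bar>"])
    fix x y :: "'a ell2" and r :: real
    have "restr I (evec (x + y)) = (\<lambda>i. restr I (evec x) i + restr I (evec y) i)"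
      by (auto simp: restr_def)
    hence "T (restr I (evec (x + y))) = (\<lambda>i. T (restr I (evec x)) i + T (restr I (evec y)) i)"
      using lin_add[OF lT R R] by simp
    thus "liftT I T (x + y) = liftT I T x + liftT I T y"
      unfolding liftT_def by (simp add: mkv_add[OF lin_l2[OF lT R] lin_l2[OF lT R]])
    have "restr I (evec (r *\<^sub>R x)) = (\<lambda>i. complex_of_real r * restr I (evec x) i)"
      by (auto simp: restr_def)
    hence e: "T (restr I (evec (r *\<^sub>R x))) = (\<lambda>i. complex_of_real r * T (restr I (evec x)) i)"
      using lin_scale[OF lT R] by simp
    have Tl: "T (restr I (evec x)) \<in> l2 I" by (rule lin_l2[OF lT R])
    show "liftT I T (r *\<^sub>R x) = r *\<^sub>R liftT I T x"
      unfolding liftT_def e using Tl l2_scale[OF Tl] l2_UNIV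
      by (intro ell2_eqI) (simp add: evec_mkv_J[OF l2_scale[OF Tl]] evec_mkv_J[OF Tl])
    have "norm (liftT I T x) = l2_norm I (T (restr I (evec x)))"
      unfolding liftT_def by (rule norm_mkv[OF lin_l2[OF lT R]])
    also have "\<dots> \<le> C * l2_norm I (restr I (evec x))" using C R by blast
    also have "\<dots> \<le> \<bar>C\<bar> * l2_norm I (restr I (evec x))" using l2_norm_nonneg by (intro mult_right_mono) auto
    also have "\<dots> \<le> \<bar>C\<bar> * norm x" using restr_norm[of "evec x" I] by (intro mult_left_mono) (auto simp: norm_ell2)
    finally show "norm (liftT I T x) \<le> norm x * \<bar>C\<bar>" by (simp add: mult.commute)
  qed
qed

lemma SER: assumes T: "blin I T" and a: "Seq I a" and z: "z \<in> ball 0 1"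
  shows "mkH a z \<in> l2 I" "(\<lambda>n. T (a n) i * z^n) sums (T (mkH a z) i)"
proof -
  have lT: "l2_linear I T" using T by (simp add: blin_def)
  define c where "c n = (\<lambda>i. z^n * a n i)" for n
  have cl2: "c n \<in> l2 I" for n unfolding c_def by (rule l2_scale[OF SeqD(1)[OF a]])
  define B where "B = sqrt (\<Sum>n. (l2_norm I (a n))^2)"
  have nz: "norm z < 1" using z by simp
  have "summable (\<lambda>n. norm (mkv (c n)))"
  proof (rule summable_comparison_test)
    show "summable (\<lambda>n. B * norm z ^ n)" using nz by (intro summable_mult summable_geometric) simp
    have "norm (mkv (c n)) \<le> B * norm z ^ n" for n
    proof -
      have "norm (mkv (c n)) = norm z ^ n * l2_norm I (a n)"
        using norm_mkv[OF cl2[of n]] l2_norm_scale[of I "z^n" "a n"] by (simp add: c_def norm_power)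
      also have "\<dots> \<le> norm z ^ n * B" unfolding B_def by (intro mult_left_mono Seq_norm_le[OF a]) simp
      finally show ?thesis by (simp add: mult.commute)
    qed
    thus "\<exists>N. \<forall>n\<ge>N. norm (norm (mkv (c n))) \<le> B * norm z ^ n" by simp
  qed
  hence "summable (\<lambda>n. mkv (c n))" by (rule summable_norm_cancel)
  then obtain \<sigma> where sig: "(\<lambda>n. mkv (c n)) sums \<sigma>" by (auto simp: summable_def)
  have coord: "(\<lambda>n. z^n * a n j) sums evec \<sigma> j" for j
    using bounded_linear.sums[OF bounded_linear_coord sig, of j] evec_mkv_J[OF cl2] by (simp add: c_def)
  have ev: "evec \<sigma> = mkH a z"
  proof
    fix j
    show "evec \<sigma> j = mkH a z j"
      using coord[of j] mkH_sums[OF a z, of j] by (simp add: mult.commute sums_unique2)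
  qed
  have off: "mkH a z j = 0" if "j \<notin> I" for j
    using that z by (simp add: mkH_def l2_out[OF SeqD(1)[OF a]])
  show Fl2: "mkH a z \<in> l2 I" using ev off evec_l2[of \<sigma>] by (metis l2_UNIV_J)
  have "(\<lambda>n. liftT I T (mkv (c n))) sums liftT I T \<sigma>"
    by (rule bounded_linear.sums[OF bounded_linear_lift[OF T] sig])
  moreover have "liftT I T (mkv (c n)) = mkv (\<lambda>i. z^n * T (a n) i)" for n
    unfolding liftT_def using cl2[of n] by (simp add: restr_id c_def lin_scale[OF lT SeqD(1)[OF a]])
  moreover have "liftT I T \<sigma> = mkv (T (mkH a z))"
    unfolding liftT_def ev using Fl2 by (simp add: restr_id)
  ultimately have "(\<lambda>n. mkv (\<lambda>i. z^n * T (a n) i)) sums mkv (T (mkH a z))" by simp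
  from bounded_linear.sums[OF bounded_linear_coord this, of i]
  have "(\<lambda>n. z^n * T (a n) i) sums T (mkH a z) i"
    using evec_mkv_J[OF l2_scale[OF lin_l2[OF lT SeqD(1)[OF a]]]] evec_mkv_J[OF lin_l2[OF lT Fl2]] by simp
  thus "(\<lambda>n. T (a n) i * z^n) sums (T (mkH a z) i)" by (simp add: mult.commute)
qed


definition sh :: "(nat \<Rightarrow> 'i \<Rightarrow> complex) \<Rightarrow> nat \<Rightarrow> 'i \<Rightarrow> complex" where
  "sh b n = (if n = 0 then (\<lambda>_. 0) else b (n - 1))"

lemma sh_0[simp]: "sh b 0 = (\<lambda>_. 0)" by (simp add: sh_def)
lemma sh_Suc[simp]: "sh b (Suc n) = b n" by (simp add: sh_def)

lemma Seq_sh: assumes b: "Seq I b" shows "Seq I (sh b)"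
  unfolding Seq_def
proof (intro conjI allI)
  show "sh b n \<in> l2 I" for n using SeqD(1)[OF b] by (cases n) auto
  have "summable (\<lambda>n. (l2_norm I (sh b (Suc n)))^2)" using SeqD(2)[OF b] by simp
  thus "summable (\<lambda>n. (l2_norm I (sh b n))^2)" using summable_Suc_iff[of "\<lambda>n. (l2_norm I (sh b n))^2"] by blast
qed

lemma Seq_T: assumes T: "blin I T" and a: "Seq I a" shows "Seq I (\<lambda>n. T (a n))"
proof -
  obtain C where C: "\<forall>x\<in>l2 I. l2_norm I (T x) \<le> C * l2_norm I x" using T by (auto simp: blin_def)
  have lT: "l2_linear I T" using T by (simp add: blin_def)
  show ?thesis
    unfolding Seq_def
  proof (intro conjI allI)
    show "T (a n) \<in> l2 I" for n by (rule lin_l2[OF lT SeqD(1)[OF a]])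
    show "summable (\<lambda>n. (l2_norm I (T (a n)))^2)"
    proof (rule summable_comparison_test)
      show "summable (\<lambda>n. C^2 * (l2_norm I (a n))^2)" by (intro summable_mult SeqD(2)[OF a])
      have "(l2_norm I (T (a n)))^2 \<le> C^2 * (l2_norm I (a n))^2" for n
      proof -
        have "l2_norm I (T (a n)) \<le> C * l2_norm I (a n)" using C SeqD(1)[OF a] by blast
        hence "(l2_norm I (T (a n)))^2 \<le> (C * l2_norm I (a n))^2"
          using l2_norm_nonneg by (intro power_mono) auto
        thus ?thesis by (simp add: power_mult_distrib)
      qed
      thus "\<exists>N. \<forall>n\<ge>N. norm ((l2_norm I (T (a n)))^2) \<le> C^2 * (l2_norm I (a n))^2" by simp
    qed
  qed
qed

lemma sh_sums: assumes b: "Seq I b" and z: "z \<in> ball 0 1"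
  shows "(\<lambda>n. sh b n i * z^n) sums (z * mkH b z i)"
proof -
  have "(\<lambda>n. z * (b n i * z^n)) sums (z * mkH b z i)" by (intro sums_mult mkH_sums[OF b z])
  hence "(\<lambda>n. sh b (Suc n) i * z^(Suc n)) sums (z * mkH b z i)" by (simp add: algebra_simps)
  hence "(\<lambda>n. sh b n i * z^n) sums (z * mkH b z i + sh b 0 i * z^0)"
    using sums_Suc_iff[of "\<lambda>n. sh b n i * z^n" "z * mkH b z i"] by blast
  thus ?thesis by simp
qed

lemma mkH_sh: assumes b: "Seq I b"
  shows "mkH (sh b) = (\<lambda>z i. if z \<in> ball 0 1 then z * mkH b z i else 0)"
proof (intro ext)
  fix z i
  show "mkH (sh b) z i = (if z \<in> ball 0 1 then z * mkH b z i else 0)"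
  proof (cases "z \<in> ball 0 1")
    case True
    thus ?thesis using mkH_sums[OF Seq_sh[OF b] True, of i] sh_sums[OF b True, of i] by (simp add: sums_unique2)
  qed (simp add: mkH_def)
qed

lemma MULT:
  assumes T1: "blin I T1" and T2: "blin I T2" and a: "Seq I a"
    and phi: "\<And>z x. z \<in> ball 0 1 \<Longrightarrow> x \<in> l2 I \<Longrightarrow> \<phi> z x = (\<lambda>i. T1 x i + z * T2 x i)"
  shows "mult_op \<phi> (mkH a) = mkH (\<lambda>n i. T1 (a n) i + sh (\<lambda>n. T2 (a n)) n i)"
    and "Seq I (\<lambda>n i. T1 (a n) i + sh (\<lambda>n. T2 (a n)) n i)"
proof -
  show S: "Seq I (\<lambda>n i. T1 (a n) i + sh (\<lambda>n. T2 (a n)) n i)"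
    by (rule Seq_add[OF Seq_T[OF T1 a] Seq_sh[OF Seq_T[OF T2 a]]])
  show "mult_op \<phi> (mkH a) = mkH (\<lambda>n i. T1 (a n) i + sh (\<lambda>n. T2 (a n)) n i)"
  proof (intro ext)
    fix z i
    show "mult_op \<phi> (mkH a) z i = mkH (\<lambda>n i. T1 (a n) i + sh (\<lambda>n. T2 (a n)) n i) z i"
    proof (cases "z \<in> ball 0 1")
      case True
      have Fl2: "mkH a z \<in> l2 I" by (rule SER(1)[OF blin_id a True])
      have lhs: "mult_op \<phi> (mkH a) z i = T1 (mkH a z) i + z * T2 (mkH a z) i"
        using True phi[OF True Fl2] by (simp add: mult_op_def)
      have s1: "(\<lambda>n. T1 (a n) i * z^n) sums T1 (mkH a z) i" by (rule SER(2)[OF T1 a True])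
      have s2: "(\<lambda>n. sh (\<lambda>n. T2 (a n)) n i * z^n) sums (z * mkH (\<lambda>n. T2 (a n)) z i)"
        by (rule sh_sums[OF Seq_T[OF T2 a] True])
      have e2: "mkH (\<lambda>n. T2 (a n)) z i = T2 (mkH a z) i"
        using mkH_sums[OF Seq_T[OF T2 a] True, of i] SER(2)[OF T2 a True, of i] by (simp add: sums_unique2)
      have "(\<lambda>n. T1 (a n) i * z^n + sh (\<lambda>n. T2 (a n)) n i * z^n) sums (T1 (mkH a z) i + z * T2 (mkH a z) i)"
        using sums_add[OF s1 s2] e2 by simp
      moreover have "(\<lambda>n. (T1 (a n) i + sh (\<lambda>n. T2 (a n)) n i) * z^n) sums mkH (\<lambda>n i. T1 (a n) i + sh (\<lambda>n. T2 (a n)) n i) z i"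
        by (rule mkH_sums[OF S True])
      ultimately show ?thesis using lhs by (simp add: distrib_right sums_unique2)
    qed (simp add: mult_op_def mkH_def)
  qed
qed

lemma proj_lin: "orth_proj I P \<Longrightarrow> l2_linear I P" by (simp add: orth_proj_def)
lemma proj_idem: "orth_proj I P \<Longrightarrow> x \<in> l2 I \<Longrightarrow> P (P x) = P x" by (simp add: orth_proj_def)
lemma proj_sa: "orth_proj I P \<Longrightarrow> x \<in> l2 I \<Longrightarrow> y \<in> l2 I \<Longrightarrow> l2_inner I (P x) y = l2_inner I x (P y)"
  by (simp add: orth_proj_def)

lemma proj_bound: assumes P: "orth_proj I P" and x: "x \<in> l2 I" shows "l2_norm I (P x) \<le> l2_norm I x"
proof -
  have Px: "P x \<in> l2 I" by (rule lin_l2[OF proj_lin[OF P] x])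
  have "l2_inner I (P x) (P x) = l2_inner I x (P (P x))" by (rule proj_sa[OF P x Px])
  also have "\<dots> = l2_inner I x (P x)" using proj_idem[OF P x] by simp
  finally have "complex_of_real ((l2_norm I (P x))^2) = l2_inner I x (P x)" using l2_inner_self[OF Px] by simp
  hence "(l2_norm I (P x))^2 = cmod (l2_inner I x (P x))"
    by (metis norm_of_real abs_of_nonneg zero_le_power2)
  also have "\<dots> \<le> l2_norm I x * l2_norm I (P x)" by (rule l2_cs[OF x Px])
  finally have h: "l2_norm I (P x) * l2_norm I (P x) \<le> l2_norm I x * l2_norm I (P x)"
    by (simp add: power2_eq_square)
  show ?thesis
  proof (cases "l2_norm I (P x) = 0")
    case True thus ?thesis using l2_norm_nonneg by simp
  next
    case False
    hence "0 < l2_norm I (P x)" using l2_norm_nonneg by (simp add: less_le)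
    thus ?thesis using h by simp
  qed
qed

lemma blin_P: "orth_proj I P \<Longrightarrow> blin I P"
  unfolding blin_def using proj_lin proj_bound by (metis mult_1)

lemma uni_lin: "unitary_op I U \<Longrightarrow> l2_linear I U" by (simp add: unitary_op_def)
lemma uni_inner: "unitary_op I U \<Longrightarrow> x \<in> l2 I \<Longrightarrow> y \<in> l2 I \<Longrightarrow> l2_inner I (U x) (U y) = l2_inner I x y"
  by (simp add: unitary_op_def)
lemma uni_surj: "unitary_op I U \<Longrightarrow> y \<in> l2 I \<Longrightarrow> \<exists>w\<in>l2 I. U w = y"
  unfolding unitary_op_def by (metis imageE)

lemma uni_norm: assumes U: "unitary_op I U" and x: "x \<in> l2 I" shows "l2_norm I (U x) = l2_norm I x"
proof -
  have Ux: "U x \<in> l2 I" by (rule lin_l2[OF uni_lin[OF U] x])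
  have "complex_of_real ((l2_norm I (U x))^2) = complex_of_real ((l2_norm I x)^2)"
    using uni_inner[OF U x x] l2_inner_self[OF Ux] l2_inner_self[OF x] by simp
  hence "(l2_norm I (U x))^2 = (l2_norm I x)^2" using of_real_eq_iff by blast
  thus ?thesis using l2_norm_nonneg by (metis power2_eq_iff_nonneg)
qed

lemma blin_U: "unitary_op I U \<Longrightarrow> blin I U"
  unfolding blin_def using uni_lin uni_norm by (metis mult_1 order_refl)

lemma uni_inj: assumes U: "unitary_op I U" and x: "x \<in> l2 I" and y: "y \<in> l2 I" and e: "U x = U y"
  shows "x = y"
proof -
  have d: "(\<lambda>i. x i - y i) \<in> l2 I" using x y by (rule l2_diff)
  have "U (\<lambda>i. x i - y i) = (\<lambda>_. 0)" using lin_diff[OF uni_lin[OF U] x y] e by simp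
  hence "l2_norm I (\<lambda>i. x i - y i) = 0" using uni_norm[OF U d] by (simp add: l2_norm_def)
  hence "(\<lambda>i. x i - y i) = (\<lambda>_. 0)" by (rule l2_norm_0_imp[OF d])
  thus ?thesis by (auto simp: fun_eq_iff)
qed

lemma adj_char: assumes U: "unitary_op I U" and w: "w \<in> l2 I"
  shows "l2_adj I U (U w) = w"
  unfolding l2_adj_def
proof (rule the_equality)
  show "w \<in> l2 I \<and> (\<forall>x\<in>l2 I. l2_inner I (U x) (U w) = l2_inner I x w)"
    using w uni_inner[OF U _ w] by blast
  fix z assume z: "z \<in> l2 I \<and> (\<forall>x\<in>l2 I. l2_inner I (U x) (U w) = l2_inner I x z)"
  have d: "(\<lambda>i. z i - w i) \<in> l2 I" using z w by (intro l2_diff) auto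
  have "l2_inner I (\<lambda>i. z i - w i) z = l2_inner I (\<lambda>i. z i - w i) w"
    using z uni_inner[OF U d w] d by auto
  hence "l2_inner I (\<lambda>i. z i - w i) (\<lambda>i. z i - w i) = 0"
    using l2_inner_diff_right[OF _ w d, of z] z by simp
  hence "(\<lambda>i. z i - w i) = (\<lambda>_. 0)" by (rule l2_inner_self_0[OF d])
  thus "z = w" by (auto simp: fun_eq_iff)
qed

context
  fixes I :: "'i set" and U :: "('i \<Rightarrow> complex) \<Rightarrow> ('i \<Rightarrow> complex)"
  assumes U: "unitary_op I U"
begin

lemma adj_l2: "y \<in> l2 I \<Longrightarrow> l2_adj I U y \<in> l2 I"
  using uni_surj[OF U] adj_char[OF U] by metis

lemma adj_right: "y \<in> l2 I \<Longrightarrow> U (l2_adj I U y) = y"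
  using uni_surj[OF U] adj_char[OF U] by metis

lemma adj_left: "x \<in> l2 I \<Longrightarrow> l2_adj I U (U x) = x"
  using adj_char[OF U] by metis

lemma adj_lin: "l2_linear I (l2_adj I U)"
  unfolding l2_linear_def
proof (intro conjI ballI allI)
  fix x assume x: "x \<in> l2 I"
  show "l2_adj I U x \<in> l2 I" by (rule adj_l2[OF x])
  fix y assume y: "y \<in> l2 I"
  have s: "(\<lambda>i. l2_adj I U x i + l2_adj I U y i) \<in> l2 I" by (intro l2_add adj_l2 x y)
  have "U (\<lambda>i. l2_adj I U x i + l2_adj I U y i) = (\<lambda>i. x i + y i)"
    using lin_add[OF uni_lin[OF U] adj_l2[OF x] adj_l2[OF y]] adj_right[OF x] adj_right[OF y] by simp
  hence "l2_adj I U (\<lambda>i. x i + y i) = l2_adj I U (U (\<lambda>i. l2_adj I U x i + l2_adj I U y i))" by simp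
  also have "\<dots> = (\<lambda>i. l2_adj I U x i + l2_adj I U y i)" by (rule adj_left[OF s])
  finally show "l2_adj I U (\<lambda>i. x i + y i) = (\<lambda>i. l2_adj I U x i + l2_adj I U y i)" .
next
  fix c x assume x: "x \<in> l2 I"
  have s: "(\<lambda>i. c * l2_adj I U x i) \<in> l2 I" by (intro l2_scale adj_l2 x)
  have "U (\<lambda>i. c * l2_adj I U x i) = (\<lambda>i. c * x i)"
    using lin_scale[OF uni_lin[OF U] adj_l2[OF x]] adj_right[OF x] by simp
  hence "l2_adj I U (\<lambda>i. c * x i) = l2_adj I U (U (\<lambda>i. c * l2_adj I U x i))" by simp
  also have "\<dots> = (\<lambda>i. c * l2_adj I U x i)" by (rule adj_left[OF s])
  finally show "l2_adj I U (\<lambda>i. c * x i) = (\<lambda>i. c * l2_adj I U x i)" .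
qed

lemma adj_norm: "y \<in> l2 I \<Longrightarrow> l2_norm I (l2_adj I U y) = l2_norm I y"
  using uni_norm[OF U adj_l2] adj_right by metis

lemma blin_adj: "blin I (l2_adj I U)"
  unfolding blin_def using adj_lin adj_norm by (metis mult_1 order_refl)

lemma adj_inner: "x \<in> l2 I \<Longrightarrow> y \<in> l2 I \<Longrightarrow> l2_inner I (l2_adj I U x) y = l2_inner I x (U y)"
  using uni_inner[OF U adj_l2] adj_right by metis

end


definition single :: "('i \<Rightarrow> complex) \<Rightarrow> nat \<Rightarrow> nat \<Rightarrow> 'i \<Rightarrow> complex" where
  "single x n = (\<lambda>m. if m = n then x else (\<lambda>_. 0))"

lemma Seq_single: assumes x: "x \<in> l2 I" shows "Seq I (single x n)"
  unfolding Seq_def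
proof (intro conjI allI)
  show "single x n m \<in> l2 I" for m using x by (simp add: single_def)
  have "(\<lambda>m. if m = n then (l2_norm I x)^2 else 0) sums (l2_norm I x)^2" by (rule sums_single)
  moreover have "(\<lambda>m. (l2_norm I (single x n m))^2) = (\<lambda>m. if m = n then (l2_norm I x)^2 else 0)"
    by (auto simp: single_def l2_norm_def)
  ultimately show "summable (\<lambda>m. (l2_norm I (single x n m))^2)" by (metis sums_summable)
qed

lemma inner_single: assumes x: "x \<in> l2 I" and b: "Seq I b"
  shows "h2_inner I (mkH (single x n)) (mkH b) = l2_inner I x (b n)"
proof -
  have "(\<lambda>m. if m = n then l2_inner I x (b n) else 0) sums l2_inner I x (b n)" by (rule sums_single)
  moreover have "(\<lambda>m. l2_inner I (single x n m) (b m)) = (\<lambda>m. if m = n then l2_inner I x (b n) else 0)"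
    by (auto simp: single_def)
  ultimately show ?thesis by (simp add: h2_inner_mkH[OF Seq_single[OF x] b] sums_iff)
qed

lemma h2_norm_single0: assumes x: "x \<in> l2 I" shows "h2_norm I (mkH (single x 0)) = l2_norm I x"
proof -
  have "(\<lambda>m. if m = 0 then (l2_norm I x)^2 else 0) sums (l2_norm I x)^2" by (rule sums_single)
  moreover have "(\<lambda>m. (l2_norm I (single x 0 m))^2) = (\<lambda>m. if m = 0 then (l2_norm I x)^2 else 0)"
    by (auto simp: single_def l2_norm_def)
  ultimately show ?thesis using l2_norm_nonneg[of I x]
    by (simp add: h2_norm_mkH[OF Seq_single[OF x]] sums_iff)
qed

lemma coeff_zero: "h2_coeff (\<lambda>_ _. 0) n = (\<lambda>_. 0)"
  using coeff_mkH[OF Seq_0, of n] by (simp add: mkH_0)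

lemma zero_H2: "(\<lambda>_ _. 0) \<in> H2 I"
  using mkH_H2[OF Seq_0] by (simp add: mkH_0)

lemma h2_inner_zero_left: "h2_inner I (\<lambda>_ _. 0) G = 0"
  by (simp add: h2_inner_def coeff_zero)

context
  fixes I :: "'i set" and P U :: "('i \<Rightarrow> complex) \<Rightarrow> ('i \<Rightarrow> complex)"
  assumes P: "orth_proj I P" and U: "unitary_op I U"
begin

abbreviation "V \<equiv> l2_adj I U"

lemma blin1a: "blin I (\<lambda>x. V (\<lambda>i. x i - P x i))"
  using blin_comp[OF blin_adj[OF U] blin_diff[OF blin_id blin_P[OF P]]] by simp
lemma blin2a: "blin I (\<lambda>x. V (P x))"
  by (rule blin_comp[OF blin_adj[OF U] blin_P[OF P]])
lemma blin1b: "blin I (\<lambda>x. P (U x))"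
  by (rule blin_comp[OF blin_P[OF P] blin_U[OF U]])
lemma blin2b: "blin I (\<lambda>x i. U x i - P (U x) i)"
  using blin_diff[OF blin_U[OF U] blin1b] by simp

lemma phi1_form: assumes x: "x \<in> l2 I"
  shows "phi1 I P U z x = (\<lambda>i. V (\<lambda>i. x i - P x i) i + z * V (P x) i)"
proof -
  have Px: "P x \<in> l2 I" by (rule lin_l2[OF proj_lin[OF P] x])
  have d: "(\<lambda>i. x i - P x i) \<in> l2 I" by (rule l2_diff[OF x Px])
  have "phi1 I P U z x = V (\<lambda>i. (x i - P x i) + z * P x i)" by (simp add: phi1_def)
  also have "\<dots> = (\<lambda>i. V (\<lambda>i. x i - P x i) i + V (\<lambda>i. z * P x i) i)"
    by (rule lin_add[OF adj_lin[OF U] d l2_scale[OF Px]])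
  also have "V (\<lambda>i. z * P x i) = (\<lambda>i. z * V (P x) i)" by (rule lin_scale[OF adj_lin[OF U] Px])
  finally show ?thesis .
qed

lemma phi2_form: "phi2 I P U z x = (\<lambda>i. P (U x) i + z * (U x i - P (U x) i))"
  by (simp add: phi2_def)

lemma M1: assumes a: "Seq I a"
  shows "mult_op (phi1 I P U) (mkH a) = mkH (\<lambda>n i. V (\<lambda>i. a n i - P (a n) i) i + sh (\<lambda>n. V (P (a n))) n i)"
    and "Seq I (\<lambda>n i. V (\<lambda>i. a n i - P (a n) i) i + sh (\<lambda>n. V (P (a n))) n i)"
  using MULT[OF blin1a blin2a a, of "phi1 I P U"] phi1_form by auto

lemma M2: assumes a: "Seq I a"
  shows "mult_op (phi2 I P U) (mkH a) = mkH (\<lambda>n i. P (U (a n)) i + sh (\<lambda>n i. U (a n) i - P (U (a n)) i) n i)"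
    and "Seq I (\<lambda>n i. P (U (a n)) i + sh (\<lambda>n i. U (a n) i - P (U (a n)) i) n i)"
  using MULT[OF blin1b blin2b a, of "phi2 I P U"] phi2_form by auto

lemma phi21: assumes v: "v \<in> l2 I" shows "phi2 I P U z (phi1 I P U z v) = (\<lambda>i. z * v i)"
proof -
  have lP: "l2_linear I P" by (rule proj_lin[OF P])
  have Pv: "P v \<in> l2 I" by (rule lin_l2[OF lP v])
  define w where "w = (\<lambda>i. (v i - P v i) + z * P v i)"
  have d: "(\<lambda>i. v i - P v i) \<in> l2 I" by (rule l2_diff[OF v Pv])
  have wl2: "w \<in> l2 I" unfolding w_def by (rule l2_add[OF d l2_scale[OF Pv]])
  have Pw: "P w = (\<lambda>i. z * P v i)"
  proof -
    have "P w = (\<lambda>i. P (\<lambda>i. v i - P v i) i + P (\<lambda>i. z * P v i) i)"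
      unfolding w_def by (rule lin_add[OF lP d l2_scale[OF Pv]])
    also have "P (\<lambda>i. v i - P v i) = (\<lambda>i. P v i - P (P v) i)" by (rule lin_diff[OF lP v Pv])
    also have "P (\<lambda>i. z * P v i) = (\<lambda>i. z * P (P v) i)" by (rule lin_scale[OF lP Pv])
    finally show ?thesis using proj_idem[OF P v] by simp
  qed
  have "phi1 I P U z v = V w" by (simp add: phi1_def w_def)
  hence "U (phi1 I P U z v) = w" using adj_right[OF U wl2] by simp
  hence "phi2 I P U z (phi1 I P U z v) = (\<lambda>i. P w i + z * (w i - P w i))" by (simp add: phi2_def)
  also have "\<dots> = (\<lambda>i. z * v i)" unfolding Pw by (simp add: w_def algebra_simps)
  finally show ?thesis .
qed

lemma S_ident: assumes a: "Seq I a"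
  shows "mult_op (phi2 I P U) (mult_op (phi1 I P U) (mkH a)) = mkH (sh a)"
proof (intro ext)
  fix z i
  show "mult_op (phi2 I P U) (mult_op (phi1 I P U) (mkH a)) z i = mkH (sh a) z i"
  proof (cases "z \<in> ball 0 1")
    case True
    have Fl2: "mkH a z \<in> l2 I" by (rule SER(1)[OF blin_id a True])
    have "mult_op (phi2 I P U) (mult_op (phi1 I P U) (mkH a)) z = phi2 I P U z (phi1 I P U z (mkH a z))"
      using True by (simp add: mult_op_def)
    also have "\<dots> = (\<lambda>i. z * mkH a z i)" by (rule phi21[OF Fl2])
    finally show ?thesis using True by (simp add: mkH_sh[OF a])
  qed (simp add: mult_op_def mkH_def)
qed

end


lemma cs_l2: "l2_closed_subspace I W \<Longrightarrow> W \<subseteq> l2 I"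
  by (simp add: l2_closed_subspace_def)
lemma cs_0: "l2_closed_subspace I W \<Longrightarrow> (\<lambda>_. 0) \<in> W"
  by (simp add: l2_closed_subspace_def)
lemma cs_add: "l2_closed_subspace I W \<Longrightarrow> x \<in> W \<Longrightarrow> y \<in> W \<Longrightarrow> (\<lambda>i. x i + y i) \<in> W"
  by (simp add: l2_closed_subspace_def)
lemma cs_scale: "l2_closed_subspace I W \<Longrightarrow> x \<in> W \<Longrightarrow> (\<lambda>i. c * x i) \<in> W"
  by (simp add: l2_closed_subspace_def)
lemma cs_lim: "l2_closed_subspace I W \<Longrightarrow> (\<forall>n. s n \<in> W) \<Longrightarrow> x \<in> l2 I \<Longrightarrow>
    (\<lambda>n. l2_norm I (\<lambda>i. s n i - x i)) \<longlonglongrightarrow> 0 \<Longrightarrow> x \<in> W"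
  unfolding l2_closed_subspace_def by blast
lemma cs_diff: assumes "l2_closed_subspace I W" "x \<in> W" "y \<in> W" shows "(\<lambda>i. x i - y i) \<in> W"
  using cs_add[OF assms(1,2) cs_scale[OF assms(1,3), of "-1"]] by simp

lemma sh_in: assumes "l2_closed_subspace I W" "\<And>n. b n \<in> W" shows "sh b n \<in> W"
  using assms cs_0 by (cases n) auto

context
  fixes I :: "'i set" and P U :: "('i \<Rightarrow> complex) \<Rightarrow> ('i \<Rightarrow> complex)"
  assumes P: "orth_proj I P" and U: "unitary_op I U"
begin

lemma coef_inv:
  assumes W: "l2_closed_subspace I W" and PW: "\<forall>x\<in>W. P x \<in> W" and UW: "\<forall>x\<in>W. U x \<in> W"
    and VW: "\<forall>x\<in>W. l2_adj I U x \<in> W" and aW: "\<And>n. a n \<in> W"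
  shows "(\<lambda>i. l2_adj I U (\<lambda>i. a n i - P (a n) i) i + sh (\<lambda>n. l2_adj I U (P (a n))) n i) \<in> W"
    and "(\<lambda>i. P (U (a n)) i + sh (\<lambda>n i. U (a n) i - P (U (a n)) i) n i) \<in> W"
proof -
  have d: "(\<lambda>i. a m i - P (a m) i) \<in> W" for m using cs_diff[OF W aW] PW aW by blast
  show "(\<lambda>i. l2_adj I U (\<lambda>i. a n i - P (a n) i) i + sh (\<lambda>n. l2_adj I U (P (a n))) n i) \<in> W"
    by (rule cs_add[OF W]) (use VW d PW aW in \<open>auto intro!: sh_in[OF W]\<close>)
  have e: "(\<lambda>i. U (a m) i - P (U (a m)) i) \<in> W" for m using cs_diff[OF W] UW PW aW by blast
  show "(\<lambda>i. P (U (a n)) i + sh (\<lambda>n i. U (a n) i - P (U (a n)) i) n i) \<in> W"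
    by (rule cs_add[OF W]) (use UW PW aW e in \<open>auto intro!: sh_in[OF W]\<close>)
qed

lemma dir2:
  assumes KP: "l2_reducing I K P" and KU: "l2_reducing I K U"
    and K0: "K \<noteq> {\<lambda>_. 0}" and KE: "K \<noteq> l2 I"
  shows "\<exists>M. h2_reducing I M (mult_op (phi1 I P U)) \<and> h2_reducing I M (mult_op (phi2 I P U))
            \<and> M \<noteq> {\<lambda>_ _. 0} \<and> M \<noteq> H2 I"
proof -
  have Kcs: "l2_closed_subspace I K" using KP by (simp add: l2_reducing_def)
  have PKo: "P ` l2_orth I K \<subseteq> l2_orth I K" using KP by (simp add: l2_reducing_def)
  have UK: "U ` K \<subseteq> K" and UKo: "U ` l2_orth I K \<subseteq> l2_orth I K" using KU by (auto simp: l2_reducing_def)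
  have Kl2: "K \<subseteq> l2 I" by (rule cs_l2[OF Kcs])
  define L where "L = l2_orth I K"
  have Lcs: "l2_closed_subspace I L" unfolding L_def by (rule l2_orth_closed[OF Kl2])
  have Ll2: "L \<subseteq> l2 I" by (rule cs_l2[OF Lcs])
  define Lo where "Lo = l2_orth I L"
  have Locs: "l2_closed_subspace I Lo" unfolding Lo_def by (rule l2_orth_closed[OF Ll2])
  have Lol2: "Lo \<subseteq> l2 I" by (rule cs_l2[OF Locs])
  have lP: "l2_linear I P" by (rule proj_lin[OF P])
  have lU: "l2_linear I U" by (rule uni_lin[OF U])
  have lV: "l2_linear I (l2_adj I U)" by (rule adj_lin[OF U])
  have PL: "\<forall>x\<in>L. P x \<in> L" using PKo by (auto simp: L_def)
  have UL: "\<forall>x\<in>L. U x \<in> L" using UKo by (auto simp: L_def)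
  have VL: "\<forall>x\<in>L. l2_adj I U x \<in> L"
  proof
    fix x assume x: "x \<in> L"
    have xl2: "x \<in> l2 I" using x Ll2 by blast
    show "l2_adj I U x \<in> L"
      unfolding L_def l2_orth_def
    proof (intro CollectI conjI ballI)
      show "l2_adj I U x \<in> l2 I" by (rule adj_l2[OF U xl2])
      fix k assume k: "k \<in> K"
      have kl2: "k \<in> l2 I" using k Kl2 by blast
      have "l2_inner I (U k) x = 0" using x UK k by (auto simp: L_def l2_orth_def)
      hence "l2_inner I x (U k) = 0" by (metis l2_inner_cnj complex_cnj_zero)
      hence "l2_inner I (l2_adj I U x) k = 0" using adj_inner[OF U xl2 kl2] by simp
      thus "l2_inner I k (l2_adj I U x) = 0" by (metis l2_inner_cnj complex_cnj_zero)
    qed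
  qed
  have PLo: "\<forall>x\<in>Lo. P x \<in> Lo"
  proof
    fix x assume x: "x \<in> Lo"
    have xl2: "x \<in> l2 I" using x Lol2 by blast
    show "P x \<in> Lo" unfolding Lo_def l2_orth_def
    proof (intro CollectI conjI ballI)
      show "P x \<in> l2 I" by (rule lin_l2[OF lP xl2])
      fix y assume y: "y \<in> L"
      have yl2: "y \<in> l2 I" using y Ll2 by blast
      have "l2_inner I (P y) x = 0" using PL y x by (auto simp: Lo_def l2_orth_def)
      thus "l2_inner I y (P x) = 0" using proj_sa[OF P yl2 xl2] by simp
    qed
  qed
  have ULo: "\<forall>x\<in>Lo. U x \<in> Lo"
  proof
    fix x assume x: "x \<in> Lo"
    have xl2: "x \<in> l2 I" using x Lol2 by blast
    show "U x \<in> Lo" unfolding Lo_def l2_orth_def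
    proof (intro CollectI conjI ballI)
      show "U x \<in> l2 I" by (rule lin_l2[OF lU xl2])
      fix y assume y: "y \<in> L"
      have yl2: "y \<in> l2 I" using y Ll2 by blast
      have "l2_inner I (l2_adj I U y) x = 0" using VL y x by (auto simp: Lo_def l2_orth_def)
      thus "l2_inner I y (U x) = 0" using adj_inner[OF U yl2 xl2] by simp
    qed
  qed
  have VLo: "\<forall>x\<in>Lo. l2_adj I U x \<in> Lo"
  proof
    fix x assume x: "x \<in> Lo"
    have xl2: "x \<in> l2 I" using x Lol2 by blast
    show "l2_adj I U x \<in> Lo" unfolding Lo_def l2_orth_def
    proof (intro CollectI conjI ballI)
      show "l2_adj I U x \<in> l2 I" by (rule adj_l2[OF U xl2])
      fix y assume y: "y \<in> L"
      have yl2: "y \<in> l2 I" using y Ll2 by blast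
      have "l2_inner I (U y) x = 0" using UL y x by (auto simp: Lo_def l2_orth_def)
      hence "l2_inner I x (U y) = 0" by (metis l2_inner_cnj complex_cnj_zero)
      hence "l2_inner I (l2_adj I U x) y = 0" using adj_inner[OF U xl2 yl2] by simp
      thus "l2_inner I y (l2_adj I U x) = 0" by (metis l2_inner_cnj complex_cnj_zero)
    qed
  qed
  define M where "M = {F \<in> H2 I. \<forall>n. h2_coeff F n \<in> L}"
  have memM: "mkH a \<in> M" if a: "Seq I a" and aL: "\<And>n. a n \<in> L" for a
    using mkH_H2[OF a] coeff_mkH[OF a] aL by (simp add: M_def)
  have Mdest: "\<exists>a. Seq I a \<and> F = mkH a \<and> (\<forall>n. a n \<in> L)" if F: "F \<in> M" for F
  proof -
    from F have FH: "F \<in> H2 I" by (simp add: M_def)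
    from H2_mkH[OF FH] obtain a where a: "Seq I a" "F = mkH a" by blast
    have "a n \<in> L" for n
    proof -
      have "h2_coeff F n \<in> L" using F by (simp add: M_def)
      thus ?thesis using coeff_mkH[OF a(1), of n] a(2) by simp
    qed
    thus ?thesis using a by blast
  qed
  have MH: "M \<subseteq> H2 I" by (auto simp: M_def)
  have Mcs: "h2_closed_subspace I M"
    unfolding h2_closed_subspace_def
  proof (intro conjI ballI allI impI)
    show "M \<subseteq> H2 I" by (rule MH)
    show "(\<lambda>_ _. 0) \<in> M" using memM[OF Seq_0] cs_0[OF Lcs] by (simp add: mkH_0)
  next
    fix F G assume "F \<in> M" "G \<in> M"
    then obtain a b where a: "Seq I a" "F = mkH a" "\<And>n. a n \<in> L" and b: "Seq I b" "G = mkH b" "\<And>n. b n \<in> L"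
      using Mdest by metis
    have "mkH (\<lambda>n i. a n i + b n i) \<in> M"
      by (rule memM[OF Seq_add[OF a(1) b(1)]]) (rule cs_add[OF Lcs a(3) b(3)])
    thus "(\<lambda>z i. F z i + G z i) \<in> M" using mkH_add[OF a(1) b(1)] a(2) b(2) by simp
  next
    fix c F assume "F \<in> M"
    then obtain a where a: "Seq I a" "F = mkH a" "\<And>n. a n \<in> L" using Mdest by metis
    have "mkH (\<lambda>n i. c * a n i) \<in> M"
      by (rule memM[OF Seq_scale[OF a(1)]]) (rule cs_scale[OF Lcs a(3)])
    thus "(\<lambda>z i. c * F z i) \<in> M" using mkH_scale[OF a(1)] a(2) by simp
  next
    fix s F assume H: "(\<forall>n. s n \<in> M) \<and> F \<in> H2 I \<and> (\<lambda>n. h2_norm I (\<lambda>z i. s n z i - F z i)) \<longlonglongrightarrow> 0"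
    hence sM: "\<And>n. s n \<in> M" and FH: "F \<in> H2 I" and lim: "(\<lambda>n. h2_norm I (\<lambda>z i. s n z i - F z i)) \<longlonglongrightarrow> 0"
      by auto
    from H2_mkH[OF FH] obtain b where b: "Seq I b" "F = mkH b" by blast
    have "\<forall>n. \<exists>a. Seq I a \<and> s n = mkH a \<and> (\<forall>m. a m \<in> L)" using Mdest sM by blast
    then obtain a where a: "\<And>n. Seq I (a n)" "\<And>n. s n = mkH (a n)" "\<And>n m. a n m \<in> L" by metis
    have "b k \<in> L" for k
    proof (rule cs_lim[OF Lcs])
      show "\<forall>n. a n k \<in> L" using a(3) by blast
      show "b k \<in> l2 I" by (rule SeqD(1)[OF b(1)])
      show "(\<lambda>n. l2_norm I (\<lambda>i. a n k i - b k i)) \<longlonglongrightarrow> 0"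
      proof (rule Lim_null_comparison)
        show "\<forall>\<^sub>F n in sequentially. norm (l2_norm I (\<lambda>i. a n k i - b k i)) \<le> h2_norm I (\<lambda>z i. s n z i - F z i)"
        proof (intro always_eventually allI)
          fix n
          have Sd: "Seq I (\<lambda>m i. a n m i - b m i)" by (rule Seq_diff[OF a(1) b(1)])
          have "(\<lambda>z i. s n z i - F z i) = mkH (\<lambda>m i. a n m i - b m i)"
            using mkH_diff[OF a(1)[of n] b(1)] a(2)[of n] b(2) by simp
          hence "h2_norm I (\<lambda>z i. s n z i - F z i) = sqrt (\<Sum>m. (l2_norm I (\<lambda>i. a n m i - b m i))^2)"
            using h2_norm_mkH[OF Sd] by simp
          moreover have "l2_norm I (\<lambda>i. a n k i - b k i) \<le> sqrt (\<Sum>m. (l2_norm I (\<lambda>i. a n m i - b m i))^2)"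
            using Seq_norm_le[OF Sd, of k] by simp
          ultimately show "norm (l2_norm I (\<lambda>i. a n k i - b k i)) \<le> h2_norm I (\<lambda>z i. s n z i - F z i)"
            using l2_norm_nonneg[of I "\<lambda>i. a n k i - b k i"] by simp
        qed
      qed (rule lim)
    qed
    thus "F \<in> M" using memM[OF b(1)] b(2) by simp
  qed
  have orthD: "\<exists>b. Seq I b \<and> G = mkH b \<and> (\<forall>n. b n \<in> Lo)" if G: "G \<in> h2_orth I M" for G
  proof -
    have GH: "G \<in> H2 I" using G by (simp add: h2_orth_def)
    from H2_mkH[OF GH] obtain b where b: "Seq I b" "G = mkH b" by blast
    have "b n \<in> Lo" for n
      unfolding Lo_def l2_orth_def
    proof (intro CollectI conjI ballI)
      show "b n \<in> l2 I" by (rule SeqD(1)[OF b(1)])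
      fix x assume x: "x \<in> L"
      have xl2: "x \<in> l2 I" using x Ll2 by blast
      have "mkH (single x n) \<in> M"
        by (rule memM[OF Seq_single[OF xl2]]) (use x cs_0[OF Lcs] in \<open>auto simp: single_def\<close>)
      hence "h2_inner I (mkH (single x n)) G = 0" using G by (simp add: h2_orth_def)
      thus "l2_inner I x (b n) = 0" using inner_single[OF xl2 b(1)] b(2) by simp
    qed
    thus ?thesis using b by blast
  qed
  have orthI: "mkH c \<in> h2_orth I M" if c: "Seq I c" and cLo: "\<And>n. c n \<in> Lo" for c
    unfolding h2_orth_def
  proof (intro CollectI conjI ballI)
    show "mkH c \<in> H2 I" by (rule mkH_H2[OF c])
    fix F assume "F \<in> M"
    then obtain a where a: "Seq I a" "F = mkH a" "\<And>n. a n \<in> L" using Mdest by metis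
    have "l2_inner I (a n) (c n) = 0" for n using cLo a(3) by (auto simp: Lo_def l2_orth_def)
    thus "h2_inner I F (mkH c) = 0" using h2_inner_mkH[OF a(1) c] a(2) by simp
  qed
  have red1: "h2_reducing I M (mult_op (phi1 I P U))"
    unfolding h2_reducing_def
  proof (intro conjI Mcs subsetI)
    fix G assume "G \<in> mult_op (phi1 I P U) ` M"
    then obtain F where F: "F \<in> M" "G = mult_op (phi1 I P U) F" by blast
    then obtain a where a: "Seq I a" "F = mkH a" "\<And>n. a n \<in> L" using Mdest by metis
    show "G \<in> M" unfolding F(2) a(2) M1[OF P U a(1)]
      by (rule memM[OF M1(2)[OF P U a(1)]]) (rule coef_inv(1)[OF Lcs PL UL VL a(3)])
  next
    fix G assume "G \<in> mult_op (phi1 I P U) ` h2_orth I M"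
    then obtain F where F: "F \<in> h2_orth I M" "G = mult_op (phi1 I P U) F" by blast
    then obtain a where a: "Seq I a" "F = mkH a" "\<And>n. a n \<in> Lo" using orthD by metis
    show "G \<in> h2_orth I M" unfolding F(2) a(2) M1[OF P U a(1)]
      by (rule orthI[OF M1(2)[OF P U a(1)]]) (rule coef_inv(1)[OF Locs PLo ULo VLo a(3)])
  qed
  have red2: "h2_reducing I M (mult_op (phi2 I P U))"
    unfolding h2_reducing_def
  proof (intro conjI Mcs subsetI)
    fix G assume "G \<in> mult_op (phi2 I P U) ` M"
    then obtain F where F: "F \<in> M" "G = mult_op (phi2 I P U) F" by blast
    then obtain a where a: "Seq I a" "F = mkH a" "\<And>n. a n \<in> L" using Mdest by metis
    show "G \<in> M" unfolding F(2) a(2) M2[OF P U a(1)]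
      by (rule memM[OF M2(2)[OF P U a(1)]]) (rule coef_inv(2)[OF Lcs PL UL VL a(3)])
  next
    fix G assume "G \<in> mult_op (phi2 I P U) ` h2_orth I M"
    then obtain F where F: "F \<in> h2_orth I M" "G = mult_op (phi2 I P U) F" by blast
    then obtain a where a: "Seq I a" "F = mkH a" "\<And>n. a n \<in> Lo" using orthD by metis
    show "G \<in> h2_orth I M" unfolding F(2) a(2) M2[OF P U a(1)]
      by (rule orthI[OF M2(2)[OF P U a(1)]]) (rule coef_inv(2)[OF Locs PLo ULo VLo a(3)])
  qed
  have Lnz: "\<exists>x\<in>L. x \<noteq> (\<lambda>_. 0)"
  proof (rule ccontr)
    assume "\<not> (\<exists>x\<in>L. x \<noteq> (\<lambda>_. 0))"
    hence Lz: "\<forall>x\<in>L. x = (\<lambda>_. 0)" by blast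
    have "l2 I \<subseteq> K"
    proof
      fix y assume y: "y \<in> l2 I"
      have "y \<in> l2_orth I (l2_orth I K)"
        using y Lz by (auto simp: l2_orth_def[of I "l2_orth I K"] L_def)
      thus "y \<in> K" by (rule l2_orth_orth[OF Kcs])
    qed
    thus False using KE Kl2 by blast
  qed
  then obtain x where x: "x \<in> L" "x \<noteq> (\<lambda>_. 0)" by blast
  have xl2: "x \<in> l2 I" using x Ll2 by blast
  have cxM: "mkH (single x 0) \<in> M"
    by (rule memM[OF Seq_single[OF xl2]]) (use x cs_0[OF Lcs] in \<open>auto simp: single_def\<close>)
  have "mkH (single x 0) \<noteq> (\<lambda>_ _. 0)"
  proof
    assume "mkH (single x 0) = (\<lambda>_ _. 0)"
    hence "h2_coeff (mkH (single x 0)) 0 = (\<lambda>_. 0)" by (simp add: coeff_zero)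
    thus False using coeff_mkH[OF Seq_single[OF xl2], of 0] x(2) by (simp add: single_def)
  qed
  hence M0: "M \<noteq> {\<lambda>_ _. 0}" using cxM by blast
  have "\<exists>y\<in>K. y \<noteq> (\<lambda>_. 0)" using K0 cs_0[OF Kcs] by blast
  then obtain y where y: "y \<in> K" "y \<noteq> (\<lambda>_. 0)" by blast
  have yl2: "y \<in> l2 I" using y Kl2 by blast
  have "mkH (single y 0) \<notin> M"
  proof
    assume "mkH (single y 0) \<in> M"
    hence "h2_coeff (mkH (single y 0)) 0 \<in> L" by (simp add: M_def)
    hence "y \<in> L" using coeff_mkH[OF Seq_single[OF yl2], of 0] by (simp add: single_def)
    hence "l2_inner I y y = 0" using y by (auto simp: L_def l2_orth_def)
    thus False using l2_inner_self_0[OF yl2] y(2) by blast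
  qed
  hence ME: "M \<noteq> H2 I" using mkH_H2[OF Seq_single[OF yl2]] by blast
  show ?thesis using red1 red2 M0 ME by blast
qed

end


lemma single_add: "(\<lambda>n i. single x 0 n i + single y 0 n i) = single (\<lambda>i. x i + y i) 0"
  by (auto simp: single_def fun_eq_iff)
lemma single_scale: "(\<lambda>n i. c * single x 0 n i) = single (\<lambda>i. c * x i) 0"
  by (auto simp: single_def fun_eq_iff)
lemma single_diff: "(\<lambda>n i. single x 0 n i - single y 0 n i) = single (\<lambda>i. x i - y i) 0"
  by (auto simp: single_def fun_eq_iff)
lemma single_zero: "single (\<lambda>_. 0) n = (\<lambda>m i. 0)"
  by (auto simp: single_def fun_eq_iff)
lemma sh_single: "sh (single x n) = single x (Suc n)"
proof (intro ext)
  fix m i show "sh (single x n) m i = single x (Suc n) m i"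
    by (cases m) (auto simp: single_def)
qed

lemma Seq_Suc: assumes a: "Seq I a" shows "Seq I (\<lambda>n. a (Suc n))"
  using SeqD[OF a] summable_Suc_iff[of "\<lambda>n. (l2_norm I (a n))^2"] by (simp add: Seq_def)

lemma Seq_shift: assumes a: "Seq I a" shows "Seq I (\<lambda>m. a (m + n))"
  using SeqD[OF a] summable_ignore_initial_segment[of "\<lambda>n. (l2_norm I (a n))^2" n] by (simp add: Seq_def)

context
  fixes I :: "'i set" and P U :: "('i \<Rightarrow> complex) \<Rightarrow> ('i \<Rightarrow> complex)"
  assumes P: "orth_proj I P" and U: "unitary_op I U"
begin

lemma dir1:
  assumes R1: "h2_reducing I M (mult_op (phi1 I P U))" and R2: "h2_reducing I M (mult_op (phi2 I P U))"
    and M0: "M \<noteq> {\<lambda>_ _. 0}" and ME: "M \<noteq> H2 I"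
  shows "\<exists>K. l2_reducing I K P \<and> l2_reducing I K U \<and> K \<noteq> {\<lambda>_. 0} \<and> K \<noteq> l2 I"
proof -
  have Mcs: "h2_closed_subspace I M" using R1 by (simp add: h2_reducing_def)
  have MH: "M \<subseteq> H2 I" and Mz: "(\<lambda>_ _. 0) \<in> M"
    and Madd: "\<And>F G. F \<in> M \<Longrightarrow> G \<in> M \<Longrightarrow> (\<lambda>z i. F z i + G z i) \<in> M"
    and Mscale: "\<And>c F. F \<in> M \<Longrightarrow> (\<lambda>z i. c * F z i) \<in> M"
    using Mcs unfolding h2_closed_subspace_def by blast+
  have Mlim: "\<And>s F. (\<forall>n. s n \<in> M) \<Longrightarrow> F \<in> H2 I \<Longrightarrow> (\<lambda>n. h2_norm I (\<lambda>z i. s n z i - F z i)) \<longlonglongrightarrow> 0 \<Longrightarrow> F \<in> M"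
    using Mcs unfolding h2_closed_subspace_def by blast
  have inv1: "mult_op (phi1 I P U) F \<in> M" if "F \<in> M" for F using R1 that by (auto simp: h2_reducing_def)
  have inv2: "mult_op (phi2 I P U) F \<in> M" if "F \<in> M" for F using R2 that by (auto simp: h2_reducing_def)
  have inv1o: "mult_op (phi1 I P U) F \<in> h2_orth I M" if "F \<in> h2_orth I M" for F
    using R1 that by (auto simp: h2_reducing_def)
  have inv2o: "mult_op (phi2 I P U) F \<in> h2_orth I M" if "F \<in> h2_orth I M" for F
    using R2 that by (auto simp: h2_reducing_def)
  have SM: "mkH (sh a) \<in> M" if a: "Seq I a" and aM: "mkH a \<in> M" for a
    using inv2[OF inv1[OF aM]] S_ident[OF P U a] by simp
  have SMo: "mkH (sh b) \<in> h2_orth I M" if b: "Seq I b" and bM: "mkH b \<in> h2_orth I M" for b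
    using inv2o[OF inv1o[OF bM]] S_ident[OF P U b] by simp
  have Mdiff: "(\<lambda>z i. F z i - G z i) \<in> M" if "F \<in> M" "G \<in> M" for F G
    using Madd[OF that(1) Mscale[OF that(2), of "-1"]] by simp
  have D1: "mkH (\<lambda>n. a (Suc n)) \<in> M" if a: "Seq I a" and aM: "mkH a \<in> M" for a
  proof (rule h2_orth_orth[OF Mcs])
    have Sa: "Seq I (\<lambda>n. a (Suc n))" by (rule Seq_Suc[OF a])
    show "mkH (\<lambda>n. a (Suc n)) \<in> h2_orth I (h2_orth I M)"
      unfolding h2_orth_def[of I "h2_orth I M"]
    proof (intro CollectI conjI ballI)
      show "mkH (\<lambda>n. a (Suc n)) \<in> H2 I" by (rule mkH_H2[OF Sa])
      fix N assume N: "N \<in> h2_orth I M"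
      have NH: "N \<in> H2 I" using N by (simp add: h2_orth_def)
      from H2_mkH[OF NH] obtain b where b: "Seq I b" "N = mkH b" by blast
      have "mkH (sh b) \<in> h2_orth I M" using SMo[OF b(1)] N b(2) by simp
      hence "h2_inner I (mkH a) (mkH (sh b)) = 0" using aM by (simp add: h2_orth_def)
      hence "(\<Sum>n. l2_inner I (a n) (sh b n)) = 0" by (simp add: h2_inner_mkH[OF a Seq_sh[OF b(1)]])
      moreover have "summable (\<lambda>n. l2_inner I (a n) (sh b n))" by (rule inner_summable[OF a Seq_sh[OF b(1)]])
      ultimately have "(\<lambda>n. l2_inner I (a n) (sh b n)) sums (0 + l2_inner I (a 0) (sh b 0))"
        by (simp add: sums_iff)
      hence "(\<lambda>n. l2_inner I (a (Suc n)) (sh b (Suc n))) sums 0"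
        using sums_Suc_iff[of "\<lambda>n. l2_inner I (a n) (sh b n)" 0] by simp
      hence "(\<lambda>n. cnj (l2_inner I (a (Suc n)) (b n))) sums cnj 0"
        using sums_cnj[of "\<lambda>n. l2_inner I (a (Suc n)) (b n)" 0] by simp
      hence "(\<lambda>n. l2_inner I (b n) (a (Suc n))) sums 0" by (simp add: l2_inner_cnj)
      thus "h2_inner I N (mkH (\<lambda>n. a (Suc n))) = 0"
        using h2_inner_mkH[OF b(1) Sa] b(2) by (simp add: sums_iff)
    qed
  qed
  have D2: "Seq I (\<lambda>m. a (m + n)) \<and> mkH (\<lambda>m. a (m + n)) \<in> M" if a: "Seq I a" and aM: "mkH a \<in> M" for a n
  proof (induction n)
    case 0 thus ?case using a aM by simp
  next
    case (Suc n)
    hence "mkH (\<lambda>m. a (Suc m + n)) \<in> M" using D1[of "\<lambda>m. a (m + n)"] by simp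
    thus ?case using Seq_shift[OF a, of "Suc n"] by simp
  qed
  have D3: "mkH (single (a 0) 0) \<in> M" if a: "Seq I a" and aM: "mkH a \<in> M" for a
  proof -
    have Sa: "Seq I (\<lambda>n. a (Suc n))" by (rule Seq_Suc[OF a])
    have "mkH (sh (\<lambda>n. a (Suc n))) \<in> M" by (rule SM[OF Sa D1[OF a aM]])
    hence "(\<lambda>z i. mkH a z i - mkH (sh (\<lambda>n. a (Suc n))) z i) \<in> M" by (rule Mdiff[OF aM])
    also have "(\<lambda>z i. mkH a z i - mkH (sh (\<lambda>n. a (Suc n))) z i) = mkH (\<lambda>n i. a n i - sh (\<lambda>n. a (Suc n)) n i)"
      by (rule mkH_diff[OF a Seq_sh[OF Sa], symmetric])
    also have "(\<lambda>n i. a n i - sh (\<lambda>n. a (Suc n)) n i) = single (a 0) 0"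
    proof (intro ext)
      fix n i show "a n i - sh (\<lambda>n. a (Suc n)) n i = single (a 0) 0 n i"
        by (cases n) (auto simp: single_def)
    qed
    finally show ?thesis .
  qed
  have Dall: "mkH (single (a n) 0) \<in> M" if a: "Seq I a" and aM: "mkH a \<in> M" for a n
    using D3[of "\<lambda>m. a (m + n)"] D2[OF a aM, of n] by simp
  define K where "K = {x \<in> l2 I. mkH (single x 0) \<in> M}"
  have Kl2: "K \<subseteq> l2 I" by (auto simp: K_def)
  have KallM: "a n \<in> K" if a: "Seq I a" and aM: "mkH a \<in> M" for a n
    using Dall[OF a aM] SeqD(1)[OF a] by (simp add: K_def)
  have Kcs: "l2_closed_subspace I K"
    unfolding l2_closed_subspace_def
  proof (intro conjI ballI allI impI)
    show "K \<subseteq> l2 I" by (rule Kl2)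
    show "(\<lambda>_. 0) \<in> K" using Mz by (simp add: K_def single_zero mkH_0)
  next
    fix x y assume x: "x \<in> K" and y: "y \<in> K"
    have xl2: "x \<in> l2 I" and yl2: "y \<in> l2 I" using x y by (auto simp: K_def)
    have "mkH (single (\<lambda>i. x i + y i) 0) = (\<lambda>z i. mkH (single x 0) z i + mkH (single y 0) z i)"
      using mkH_add[OF Seq_single[OF xl2, of 0] Seq_single[OF yl2, of 0]] by (simp add: single_add)
    thus "(\<lambda>i. x i + y i) \<in> K" using Madd x y l2_add[OF xl2 yl2] by (auto simp: K_def)
  next
    fix c x assume x: "x \<in> K"
    have xl2: "x \<in> l2 I" using x by (auto simp: K_def)
    have "mkH (single (\<lambda>i. c * x i) 0) = (\<lambda>z i. c * mkH (single x 0) z i)"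
      using mkH_scale[OF Seq_single[OF xl2, of 0]] by (simp add: single_scale)
    thus "(\<lambda>i. c * x i) \<in> K" using Mscale x l2_scale[OF xl2] by (auto simp: K_def)
  next
    fix s x assume H: "(\<forall>n. s n \<in> K) \<and> x \<in> l2 I \<and> (\<lambda>n. l2_norm I (\<lambda>i. s n i - x i)) \<longlonglongrightarrow> 0"
    hence sK: "\<And>n. s n \<in> K" and xl2: "x \<in> l2 I" and lim: "(\<lambda>n. l2_norm I (\<lambda>i. s n i - x i)) \<longlonglongrightarrow> 0"
      by auto
    have sl2: "s n \<in> l2 I" for n using sK Kl2 by blast
    have eq: "h2_norm I (\<lambda>z i. mkH (single (s n) 0) z i - mkH (single x 0) z i) = l2_norm I (\<lambda>i. s n i - x i)" for n
    proof -
      have "(\<lambda>z i. mkH (single (s n) 0) z i - mkH (single x 0) z i) = mkH (single (\<lambda>i. s n i - x i) 0)"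
        using mkH_diff[OF Seq_single[OF sl2[of n], of 0] Seq_single[OF xl2, of 0]] by (simp add: single_diff)
      thus ?thesis using h2_norm_single0[OF l2_diff[OF sl2[of n] xl2]] by simp
    qed
    have "mkH (single x 0) \<in> M"
      by (rule Mlim[of "\<lambda>n. mkH (single (s n) 0)"]) (use sK mkH_H2[OF Seq_single[OF xl2, of 0]] lim eq in \<open>auto simp: K_def\<close>)
    thus "x \<in> K" using xl2 by (simp add: K_def)
  qed
  have lP: "l2_linear I P" by (rule proj_lin[OF P])
  have lU: "l2_linear I U" by (rule uni_lin[OF U])
  have lV: "l2_linear I (l2_adj I U)" by (rule adj_lin[OF U])
  have UK: "U x \<in> K" if x: "x \<in> K" for x
  proof -
    have xl2: "x \<in> l2 I" using x Kl2 by blast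
    have Sx: "Seq I (single x 0)" by (rule Seq_single[OF xl2])
    define c where "c = (\<lambda>n i. P (U (single x 0 n)) i + sh (\<lambda>n i. U (single x 0 n) i - P (U (single x 0 n)) i) n i)"
    have "mkH c \<in> M" using inv2[of "mkH (single x 0)"] x M2(1)[OF P U Sx] by (simp add: K_def c_def)
    hence cK: "c n \<in> K" for n using KallM[OF M2(2)[OF P U Sx]] by (simp add: c_def)
    have c0: "c 0 = P (U x)" by (simp add: c_def single_def)
    have c1: "c 1 = (\<lambda>i. U x i - P (U x) i)"
      by (simp add: c_def single_def lin_0[OF lU] lin_0[OF lP])
    have "(\<lambda>i. c 0 i + c 1 i) \<in> K" by (rule cs_add[OF Kcs cK cK])
    thus ?thesis unfolding c0 c1 by simp
  qed
  have VK: "l2_adj I U x \<in> K \<and> (\<lambda>i. x i - P x i) \<in> K" if x: "x \<in> K" for x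
  proof -
    have xl2: "x \<in> l2 I" using x Kl2 by blast
    have Pxl2: "P x \<in> l2 I" by (rule lin_l2[OF lP xl2])
    have dl2: "(\<lambda>i. x i - P x i) \<in> l2 I" by (rule l2_diff[OF xl2 Pxl2])
    have Sx: "Seq I (single x 0)" by (rule Seq_single[OF xl2])
    define c where "c = (\<lambda>n i. l2_adj I U (\<lambda>i. single x 0 n i - P (single x 0 n) i) i + sh (\<lambda>n. l2_adj I U (P (single x 0 n))) n i)"
    have "mkH c \<in> M" using inv1[of "mkH (single x 0)"] x M1(1)[OF P U Sx] by (simp add: K_def c_def)
    hence cK: "c n \<in> K" for n using KallM[OF M1(2)[OF P U Sx]] by (simp add: c_def)
    have c0: "c 0 = l2_adj I U (\<lambda>i. x i - P x i)" by (simp add: c_def single_def)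
    have c1: "c 1 = l2_adj I U (P x)"
    proof -
      have "(\<lambda>i. (0::complex) - P (\<lambda>_. 0) i) = (\<lambda>_. 0)" by (simp add: lin_0[OF lP])
      thus ?thesis by (simp add: c_def single_def lin_0[OF lV])
    qed
    have "l2_adj I U x = (\<lambda>i. c 0 i + c 1 i)"
    proof -
      have "l2_adj I U (\<lambda>i. (x i - P x i) + P x i) = (\<lambda>i. c 0 i + c 1 i)"
        unfolding c0 c1 by (rule lin_add[OF lV dl2 Pxl2])
      thus ?thesis by simp
    qed
    hence VxK: "l2_adj I U x \<in> K" using cs_add[OF Kcs cK cK] by simp
    have "U (c 0) = (\<lambda>i. x i - P x i)" unfolding c0 by (rule adj_right[OF U dl2])
    hence "(\<lambda>i. x i - P x i) \<in> K" using UK[OF cK[of 0]] by simp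
    thus ?thesis using VxK by blast
  qed
  have PK: "P x \<in> K" if x: "x \<in> K" for x
  proof -
    have "(\<lambda>i. x i - (x i - P x i)) \<in> K" by (rule cs_diff[OF Kcs x conjunct2[OF VK[OF x]]])
    thus ?thesis by simp
  qed
  have redP: "l2_reducing I K P"
    unfolding l2_reducing_def
  proof (intro conjI Kcs subsetI)
    fix y assume "y \<in> P ` K" thus "y \<in> K" using PK by blast
  next
    fix y assume "y \<in> P ` l2_orth I K"
    then obtain w where w: "w \<in> l2_orth I K" "y = P w" by blast
    have wl2: "w \<in> l2 I" using w by (simp add: l2_orth_def)
    show "y \<in> l2_orth I K"
      unfolding l2_orth_def
    proof (intro CollectI conjI ballI)
      show "y \<in> l2 I" using lin_l2[OF lP wl2] w by simp
      fix k assume k: "k \<in> K"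
      have kl2: "k \<in> l2 I" using k Kl2 by blast
      have "l2_inner I (P k) w = 0" using w PK[OF k] by (simp add: l2_orth_def)
      thus "l2_inner I k y = 0" using proj_sa[OF P kl2 wl2] w by simp
    qed
  qed
  have redU: "l2_reducing I K U"
    unfolding l2_reducing_def
  proof (intro conjI Kcs subsetI)
    fix y assume "y \<in> U ` K" thus "y \<in> K" using UK by blast
  next
    fix y assume "y \<in> U ` l2_orth I K"
    then obtain w where w: "w \<in> l2_orth I K" "y = U w" by blast
    have wl2: "w \<in> l2 I" using w by (simp add: l2_orth_def)
    show "y \<in> l2_orth I K"
      unfolding l2_orth_def
    proof (intro CollectI conjI ballI)
      show "y \<in> l2 I" using lin_l2[OF lU wl2] w by simp
      fix k assume k: "k \<in> K"
      have kl2: "k \<in> l2 I" using k Kl2 by blast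
      have "l2_inner I (l2_adj I U k) w = 0" using w conjunct1[OF VK[OF k]] by (simp add: l2_orth_def)
      thus "l2_inner I k y = 0" using adj_inner[OF U kl2 wl2] w by simp
    qed
  qed
  have K0: "K \<noteq> {\<lambda>_. 0}"
  proof
    assume Kz: "K = {\<lambda>_. 0}"
    obtain F where F: "F \<in> M" "F \<noteq> (\<lambda>_ _. 0)" using M0 Mz by blast
    from H2_mkH[of F I] F MH obtain a where a: "Seq I a" "F = mkH a" by blast
    have "a n = (\<lambda>_. 0)" for n using KallM[OF a(1)] F a(2) Kz by blast
    hence "a = (\<lambda>n i. 0)" by (auto simp: fun_eq_iff)
    hence "F = (\<lambda>_ _. 0)" using a(2) mkH_0 by simp
    thus False using F(2) by simp
  qed
  have KE: "K \<noteq> l2 I"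
  proof
    assume KE: "K = l2 I"
    have singM: "mkH (single x n) \<in> M" if x: "x \<in> l2 I" for x n
    proof (induction n)
      case 0
      have "x \<in> K" using x KE by simp
      thus ?case by (simp add: K_def)
    next
      case (Suc n) thus ?case using SM[OF Seq_single[OF x]] by (simp add: sh_single)
    qed
    have orth0: "N = (\<lambda>_ _. 0)" if N: "N \<in> h2_orth I M" for N
    proof -
      have NH: "N \<in> H2 I" using N by (simp add: h2_orth_def)
      from H2_mkH[OF NH] obtain b where b: "Seq I b" "N = mkH b" by blast
      have "b n = (\<lambda>_. 0)" for n
      proof -
        have bl2: "b n \<in> l2 I" by (rule SeqD(1)[OF b(1)])
        have "h2_inner I (mkH (single (b n) n)) N = 0" using N singM[OF bl2] by (simp add: h2_orth_def)
        hence "l2_inner I (b n) (b n) = 0" using inner_single[OF bl2 b(1)] b(2) by simp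
        thus ?thesis by (rule l2_inner_self_0[OF bl2])
      qed
      hence "b = (\<lambda>n i. 0)" by (auto simp: fun_eq_iff)
      thus ?thesis using b(2) mkH_0 by simp
    qed
    have "H2 I \<subseteq> M"
    proof
      fix G assume G: "G \<in> H2 I"
      have "G \<in> h2_orth I (h2_orth I M)"
        unfolding h2_orth_def[of I "h2_orth I M"] using G orth0 h2_inner_zero_left by auto
      thus "G \<in> M" by (rule h2_orth_orth[OF Mcs])
    qed
    thus False using ME MH by blast
  qed
  show ?thesis using redP redU K0 KE by blast
qed

end

theorem lemma3p8:
  fixes I :: "'i set"
    and P U :: "('i \<Rightarrow> complex) \<Rightarrow> ('i \<Rightarrow> complex)"
  assumes "orth_proj I P"
    and "unitary_op I U"
  shows "(\<exists>M. h2_reducing I M (mult_op (phi1 I P U)) \<and> h2_reducing I M (mult_op (phi2 I P U))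
            \<and> M \<noteq> {\<lambda>_ _. 0} \<and> M \<noteq> H2 I)
     \<longleftrightarrow> (\<exists>K. l2_reducing I K P \<and> l2_reducing I K U \<and> K \<noteq> {\<lambda>_. 0} \<and> K \<noteq> l2 I)"
proof
  assume "\<exists>M. h2_reducing I M (mult_op (phi1 I P U)) \<and> h2_reducing I M (mult_op (phi2 I P U))
            \<and> M \<noteq> {\<lambda>_ _. 0} \<and> M \<noteq> H2 I"
  then obtain M where "h2_reducing I M (mult_op (phi1 I P U))" "h2_reducing I M (mult_op (phi2 I P U))"
    "M \<noteq> {\<lambda>_ _. 0}" "M \<noteq> H2 I" by blast
  thus "\<exists>K. l2_reducing I K P \<and> l2_reducing I K U \<and> K \<noteq> {\<lambda>_. 0} \<and> K \<noteq> l2 I"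
    by (rule dir1[OF assms])
next
  assume "\<exists>K. l2_reducing I K P \<and> l2_reducing I K U \<and> K \<noteq> {\<lambda>_. 0} \<and> K \<noteq> l2 I"
  then obtain K where "l2_reducing I K P" "l2_reducing I K U" "K \<noteq> {\<lambda>_. 0}" "K \<noteq> l2 I" by blast
  thus "\<exists>M. h2_reducing I M (mult_op (phi1 I P U)) \<and> h2_reducing I M (mult_op (phi2 I P U))
            \<and> M \<noteq> {\<lambda>_ _. 0} \<and> M \<noteq> H2 I"
    by (rule dir2[OF assms])
qed


end
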